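(* Assume the standing setting below. If $P_1,P_2\in C([0,T];\mathbb{R}^{n\times n})$ are both solutions of the equilibrium Riccati equation defined below, then $P_1(t)=P_2(t)$ for all $t\in[0,T]$.
   Context: Standing setting. Fix $T>0$ and integers $n,m\ge1$. Let $A\in L^1((0,T);\mathbb{R}^{n\times n})$, $B\in L^2((0,T);\mathbb{R}^{n\times m})$, $b\in L^1((0,T);\mathbb{R}^n)$. Let $M\in C([0,T]^2;\mathbb{R}^{m\times m})$ take positive definite symmetric values; $Q\in C([0,T]^2;\mathbb{R}^{n\times n})$ and $G\in C^1([0,T];\mathbb{R}^{n\times n})$ take positive semidefinite symmetric values; $S\in C([0,T]^2;\mathbb{R}^{m\times n})$; $q\in C([0,T]^2;\mathbb{R}^n)$, $\rho\in C([0,T]^2;\mathbb{R}^m)$, $g\in C^1([0,T];\mathbb{R}^n)$. The functions $Q,S,M,q,\rho$ are continuously differentiable in their first variable, with these partial derivatives denoted $Q_t,S_t,M_t,q_t,\rho_t$; $\dot G$ is the derivative of $G$. Let $E(s,t)=\exp\big(\int_t^sA(\tau)d\tau\big)$. Equilibrium Riccati equation. For $P\in C([0,T];\mathbb{R}^{n\times n})$ set $\Gamma(t)=M^{-1}(t,t)\big(B^\top(t)P(t)+S(t,t)\big)$, $\mathbb{E}(s,t)=\exp\Big(\int_t^s\big(A(\tau)-B(\tau)\Gamma(\tau)\big)d\tau\Big)$, and $$\mathbb{Q}(t)=\mathbb{E}^\top(T,t)\dot G(t)\mathbb{E}(T,t)+\int_t^T\mathbb{E}^\top(s,t)\big[Q_t(t,s)-\Gamma^\top(s)S_t(t,s)-S_t^\top(t,s)\Gamma(s)+\Gamma^\top(s)M_t(t,s)\Gamma(s)\big]\mathbb{E}(s,t)ds.$$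 The Riccati equation is $\dot P(t)+A^\top(t)P(t)+P(t)A(t)+Q(t,t)-\mathbb{Q}(t)-\Gamma^\top(t)M(t,t)\Gamma(t)=0$ on $[0,T)$, $P(T)=G(T)$. A solution is $P\in C([0,T];\mathbb{R}^{n\times n})$ satisfying, for all $t\in[0,T]$, $$P(t)=\mathbb{E}^\top(T,t)G(T)\mathbb{E}(T,t)+\int_t^T\mathbb{E}^\top(\tau,t)\big[Q(\tau,\tau)-S^\top(\tau,\tau)M^{-1}(\tau,\tau)S(\tau,\tau)-\mathbb{Q}(\tau)+P(\tau)B(\tau)M^{-1}(\tau,\tau)B^\top(\tau)P(\tau)\big]\mathbb{E}(\tau,t)d\tau,$$ or equivalently $P(t)=E^\top(T,t)G(T)E(T,t)+\int_t^TE^\top(\tau,t)\big[Q(\tau,\tau)-\mathbb{Q}(\tau)-\Gamma^\top(\tau)M(\tau,\tau)\Gamma(\tau)\big]E(\tau,t)d\tau$. *)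

theory Defs
  imports "HOL-Analysis.Analysis"
begin

text \<open>Matrices are represented as real^'c^'r (r rows, c columns); matrix product is **.
  Note that * on vec is componentwise, so matrix powers and the matrix exponential are
  defined explicitly here.\<close>

primrec mpow :: "real^'n^'n \<Rightarrow> nat \<Rightarrow> real^'n^'n" where
  "mpow X 0 = mat 1"
| "mpow X (Suc k) = X ** mpow X k"

definition mexp :: "real^'n^'n \<Rightarrow> real^'n^'n" where
  "mexp X = (\<Sum>k. (1 / fact k) *\<^sub>R mpow X k)"

definition sym_mat :: "real^'k^'k \<Rightarrow> bool" where
  "sym_mat X \<longleftrightarrow> transpose X = X"

definition pos_def :: "real^'k^'k \<Rightarrow> bool" where
  "pos_def X \<longleftrightarrow> sym_mat X \<and> (\<forall>x. x \<noteq> 0 \<longrightarrow> x \<bullet> (X *v x) > 0)"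

definition pos_semidef :: "real^'k^'k \<Rightarrow> bool" where
  "pos_semidef X \<longleftrightarrow> sym_mat X \<and> (\<forall>x. x \<bullet> (X *v x) \<ge> 0)"

definition Gam ::
  "(real \<Rightarrow> real \<Rightarrow> real^'m^'m) \<Rightarrow> (real \<Rightarrow> real^'m^'n) \<Rightarrow> (real \<Rightarrow> real \<Rightarrow> real^'n^'m)
   \<Rightarrow> (real \<Rightarrow> real^'n^'n) \<Rightarrow> real \<Rightarrow> real^'n^'m" where
  "Gam M B S P t = matrix_inv (M t t) ** (transpose (B t) ** P t + S t t)"

definition Emat :: "(real \<Rightarrow> real^'n^'n) \<Rightarrow> real \<Rightarrow> real \<Rightarrow> real^'n^'n" where
  "Emat A s t = mexp (LBINT \<tau>=t..s. A \<tau>)"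

definition EEmat ::
  "(real \<Rightarrow> real^'n^'n) \<Rightarrow> (real \<Rightarrow> real \<Rightarrow> real^'m^'m) \<Rightarrow> (real \<Rightarrow> real^'m^'n)
   \<Rightarrow> (real \<Rightarrow> real \<Rightarrow> real^'n^'m) \<Rightarrow> (real \<Rightarrow> real^'n^'n) \<Rightarrow> real \<Rightarrow> real \<Rightarrow> real^'n^'n" where
  "EEmat A M B S P s t = mexp (LBINT \<tau>=t..s. A \<tau> - B \<tau> ** Gam M B S P \<tau>)"

definition QQ ::
  "real \<Rightarrow> (real \<Rightarrow> real^'n^'n) \<Rightarrow> (real \<Rightarrow> real \<Rightarrow> real^'m^'m) \<Rightarrow> (real \<Rightarrow> real^'m^'n)
   \<Rightarrow> (real \<Rightarrow> real \<Rightarrow> real^'n^'m) \<Rightarrow> (real \<Rightarrow> real^'n^'n)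
   \<Rightarrow> (real \<Rightarrow> real \<Rightarrow> real^'n^'n) \<Rightarrow> (real \<Rightarrow> real \<Rightarrow> real^'n^'m) \<Rightarrow> (real \<Rightarrow> real \<Rightarrow> real^'m^'m)
   \<Rightarrow> (real \<Rightarrow> real^'n^'n) \<Rightarrow> real \<Rightarrow> real^'n^'n" where
  "QQ T A M B S Gd Qt St Mt P t =
     transpose (EEmat A M B S P T t) ** Gd t ** EEmat A M B S P T t
     + (LBINT s=t..T. transpose (EEmat A M B S P s t) **
          (Qt t s - transpose (Gam M B S P s) ** St t s - transpose (St t s) ** Gam M B S P s
           + transpose (Gam M B S P s) ** Mt t s ** Gam M B S P s) ** EEmat A M B S P s t)"

definition riccati_solution ::
  "real \<Rightarrow> (real \<Rightarrow> real^'n^'n) \<Rightarrow> (real \<Rightarrow> real^'m^'n)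
   \<Rightarrow> (real \<Rightarrow> real \<Rightarrow> real^'n^'n) \<Rightarrow> (real \<Rightarrow> real \<Rightarrow> real^'n^'m) \<Rightarrow> (real \<Rightarrow> real \<Rightarrow> real^'m^'m)
   \<Rightarrow> (real \<Rightarrow> real^'n^'n) \<Rightarrow> (real \<Rightarrow> real^'n^'n)
   \<Rightarrow> (real \<Rightarrow> real \<Rightarrow> real^'n^'n) \<Rightarrow> (real \<Rightarrow> real \<Rightarrow> real^'n^'m) \<Rightarrow> (real \<Rightarrow> real \<Rightarrow> real^'m^'m)
   \<Rightarrow> (real \<Rightarrow> real^'n^'n) \<Rightarrow> bool" where
  "riccati_solution T A B Q S M G Gd Qt St Mt P \<longleftrightarrow>
     continuous_on {0..T} P \<and>
     (\<forall>t\<in>{0..T}. P t =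
        transpose (EEmat A M B S P T t) ** G T ** EEmat A M B S P T t
        + (LBINT \<tau>=t..T. transpose (EEmat A M B S P \<tau> t) **
             (Q \<tau> \<tau> - transpose (S \<tau> \<tau>) ** matrix_inv (M \<tau> \<tau>) ** S \<tau> \<tau>
              - QQ T A M B S Gd Qt St Mt P \<tau>
              + P \<tau> ** B \<tau> ** matrix_inv (M \<tau> \<tau>) ** transpose (B \<tau>) ** P \<tau>)
             ** EEmat A M B S P \<tau> t))"

end

theory Submission
  imports Defs
begin


lemma entry_le_norm: "\<bar>(X::real^'c^'r) $ i $ j\<bar> \<le> norm X"
  by (rule order_trans[OF component_le_norm_cart Finite_Cartesian_Product.norm_nth_le])

lemma norm_le_entries: "norm (X::real^'c^'r) \<le> (\<Sum>i\<in>UNIV. \<Sum>j\<in>UNIV. \<bar>X $ i $ j\<bar>)"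
proof -
  have "norm X \<le> (\<Sum>i\<in>UNIV. norm (X $ i))"
    unfolding norm_vec_def by (rule L2_set_le_sum) auto
  also have "\<dots> \<le> (\<Sum>i\<in>UNIV. \<Sum>j\<in>UNIV. \<bar>X $ i $ j\<bar>)"
    by (rule sum_mono) (rule norm_le_l1_cart)
  finally show ?thesis .
qed

lemma norm_mm_le:
  fixes X :: "real^'k^'r" and Y :: "real^'c^'k"
  shows "norm (X ** Y) \<le> real (CARD('r) * CARD('c) * CARD('k)) * norm X * norm Y"
proof -
  have "norm (X ** Y) \<le> (\<Sum>i\<in>UNIV. \<Sum>j\<in>UNIV. \<bar>(X ** Y) $ i $ j\<bar>)"
    by (rule norm_le_entries)
  also have "\<dots> \<le> (\<Sum>i\<in>(UNIV::'r set). \<Sum>j\<in>(UNIV::'c set). \<Sum>k\<in>(UNIV::'k set). norm X * norm Y)"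
  proof (intro sum_mono)
    fix i j
    have "\<bar>(X ** Y) $ i $ j\<bar> = \<bar>\<Sum>k\<in>UNIV. X$i$k * Y$k$j\<bar>"
      by (simp add: matrix_matrix_mult_def)
    also have "\<dots> \<le> (\<Sum>k\<in>UNIV. \<bar>X$i$k * Y$k$j\<bar>)" by (rule sum_abs)
    also have "\<dots> \<le> (\<Sum>k\<in>(UNIV::'k set). norm X * norm Y)"
      unfolding abs_mult by (intro sum_mono mult_mono entry_le_norm) auto
    finally show "\<bar>(X ** Y) $ i $ j\<bar> \<le> (\<Sum>k\<in>(UNIV::'k set). norm X * norm Y)" .
  qed
  also have "\<dots> = real (CARD('r) * CARD('c) * CARD('k)) * norm X * norm Y"
    by simp
  finally show ?thesis .
qed

lemma mm_add_left: "((X::real^'k^'r) + X') ** (Y::real^'c^'k) = X ** Y + X' ** Y"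
  by (simp add: matrix_matrix_mult_def vec_eq_iff sum.distrib algebra_simps)
lemma mm_add_right: "(X::real^'k^'r) ** ((Y::real^'c^'k) + Y') = X ** Y + X ** Y'"
  by (rule matrix_add_ldistrib)
lemma mm_diff_left: "((X::real^'k^'r) - X') ** (Y::real^'c^'k) = X ** Y - X' ** Y"
  by (simp add: matrix_matrix_mult_def vec_eq_iff sum_subtractf algebra_simps)
lemma mm_diff_right: "(X::real^'k^'r) ** ((Y::real^'c^'k) - Y') = X ** Y - X ** Y'"
  by (simp add: matrix_matrix_mult_def vec_eq_iff sum_subtractf algebra_simps)
lemma mm_scale_left: "(r *\<^sub>R (X::real^'k^'r)) ** (Y::real^'c^'k) = r *\<^sub>R (X ** Y)"
  by (simp add: matrix_matrix_mult_def vec_eq_iff sum_distrib_left algebra_simps)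
lemma mm_scale_right: "(X::real^'k^'r) ** (r *\<^sub>R (Y::real^'c^'k)) = r *\<^sub>R (X ** Y)"
  by (simp add: matrix_matrix_mult_def vec_eq_iff sum_distrib_left algebra_simps)
lemma mm_zero_left[simp]: "(0::real^'k^'r) ** (Y::real^'c^'k) = 0"
  by (simp add: matrix_matrix_mult_def vec_eq_iff)
lemma mm_zero_right[simp]: "(X::real^'k^'r) ** (0::real^'c^'k) = 0"
  by (simp add: matrix_matrix_mult_def vec_eq_iff)

lemma bb_mm: "bounded_bilinear (\<lambda>(X::real^'k^'r) (Y::real^'c^'k). X ** Y)"
proof (rule bounded_bilinear.intro)
  show "\<exists>K. \<forall>X Y. norm ((X::real^'k^'r) ** (Y::real^'c^'k)) \<le> norm X * norm Y * K"
  proof (intro exI allI)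
    fix X :: "real^'k^'r" and Y :: "real^'c^'k"
    show "norm (X ** Y) \<le> norm X * norm Y * real (CARD('r) * CARD('c) * CARD('k))"
      using norm_mm_le[of X Y] by (simp add: mult_ac)
  qed
qed (simp_all only: mm_add_left mm_add_right mm_scale_left mm_scale_right)

lemma transpose_add: "transpose ((X::real^'c^'r) + Y) = transpose X + transpose Y"
  by (simp add: transpose_def vec_eq_iff)
lemma transpose_diff: "transpose ((X::real^'c^'r) - Y) = transpose X - transpose Y"
  by (simp add: transpose_def vec_eq_iff)
lemma transpose_zero[simp]: "transpose (0::real^'c^'r) = 0"
  by (simp add: transpose_def vec_eq_iff)

lemma norm_transpose_le: "norm (transpose (X::real^'c^'r)) \<le> real (CARD('r) * CARD('c)) * norm X"
proof -
  have "norm (transpose X) \<le> (\<Sum>i\<in>UNIV. \<Sum>j\<in>UNIV. \<bar>transpose X $ i $ j\<bar>)"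
    by (rule norm_le_entries)
  also have "\<dots> \<le> (\<Sum>i\<in>(UNIV::'c set). \<Sum>j\<in>(UNIV::'r set). norm X)"
    by (intro sum_mono) (simp add: transpose_def entry_le_norm)
  finally show ?thesis by (simp add: mult_ac)
qed

lemma bl_transpose: "bounded_linear (transpose :: real^'c^'r \<Rightarrow> real^'r^'c)"
proof (rule bounded_linear_intro)
  fix X :: "real^'c^'r"
  show "norm (transpose X) \<le> norm X * real (CARD('r) * CARD('c))"
    using norm_transpose_le[of X] by (simp add: mult_ac)
qed (simp_all only: transpose_add transpose_scalar)



lemma exp_series_bound:
  fixes f :: "nat \<Rightarrow> 'a::banach"
  assumes b: "\<And>n. norm (f n) \<le> C * (b ^ n / fact n)"
  shows "summable f" "norm (suminf f) \<le> C * exp b"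
proof -
  have s: "(\<lambda>n. b ^ n / fact n) sums exp b"
    using exp_converges[of b] by (simp add: divide_inverse mult.commute)
  then have sC: "(\<lambda>n. C * (b ^ n / fact n)) sums (C * exp b)"
    by (rule sums_mult)
  have sn: "summable (\<lambda>n. norm (f n))"
    by (rule summable_comparison_test'[OF sums_summable[OF sC]]) (use b in auto)
  then show "summable f" by (rule summable_norm_cancel)
  have "norm (suminf f) \<le> (\<Sum>n. norm (f n))" by (rule summable_norm[OF sn])
  also have "\<dots> \<le> (\<Sum>n. C * (b ^ n / fact n))"
    by (rule suminf_le[OF b sn sums_summable[OF sC]])
  also have "\<dots> = C * exp b" using sC by (rule sums_unique[symmetric])
  finally show "norm (suminf f) \<le> C * exp b" .
qed

definition K0 :: "'n::finite itself \<Rightarrow> real" where "K0 _ = real (CARD('n) * CARD('n) * CARD('n))"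
definition N1 :: "'n::finite itself \<Rightarrow> real" where "N1 _ = norm (mat 1 :: real^'n^'n)"

lemma K0_pos: "K0 TYPE('n::finite) > 0" by (simp add: K0_def)
lemma N1_nonneg: "N1 TYPE('n::finite) \<ge> 0" by (simp add: N1_def)

lemma norm_mm_sq: "norm ((X::real^'n^'n) ** (Y::real^'n^'n)) \<le> K0 TYPE('n) * norm X * norm Y"
  using norm_mm_le[of X Y] by (simp add: K0_def)

lemma mpow_bound: "norm (mpow (X::real^'n^'n) k) \<le> N1 TYPE('n) * (K0 TYPE('n) * norm X) ^ k"
proof (induction k)
  case 0 then show ?case by (simp add: N1_def)
next
  case (Suc k)
  have "norm (mpow X (Suc k)) \<le> K0 TYPE('n) * norm X * norm (mpow X k)"
    using norm_mm_sq[of X "mpow X k"] by simp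
  also have "\<dots> \<le> K0 TYPE('n) * norm X * (N1 TYPE('n) * (K0 TYPE('n) * norm X) ^ k)"
    using Suc K0_pos[where 'n='n] by (intro mult_left_mono) auto
  finally show ?case by (simp add: mult_ac)
qed

lemma mpow_diff_bound:
  fixes X Y :: "real^'n^'n"
  assumes "norm X \<le> c" "norm Y \<le> c"
  shows "norm (mpow X k - mpow Y k)
     \<le> K0 TYPE('n) * N1 TYPE('n) * norm (X - Y) * (2 * (K0 TYPE('n) * c + 1)) ^ k"
proof (induction k)
  case 0 then show ?case using K0_pos[where 'n='n] N1_nonneg[where 'n='n] by simp
next
  case (Suc k)
  let ?K = "K0 TYPE('n)" and ?N = "N1 TYPE('n)" and ?d = "norm (X - Y)"
  let ?a = "?K * c"
  have K: "?K > 0" by (rule K0_pos)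
  have N: "?N \<ge> 0" by (rule N1_nonneg)
  have c: "c \<ge> 0" using assms(1) norm_ge_zero order_trans by blast
  have a: "?a \<ge> 0" using K c by simp
  have eq: "mpow X (Suc k) - mpow Y (Suc k) = X ** (mpow X k - mpow Y k) + (X - Y) ** mpow Y k"
    by (simp add: mm_diff_right mm_diff_left)
  have 1: "norm (X ** (mpow X k - mpow Y k)) \<le> ?a * (?K * ?N * ?d * (2 * (?a + 1)) ^ k)"
  proof -
    have "norm (X ** (mpow X k - mpow Y k)) \<le> ?K * norm X * norm (mpow X k - mpow Y k)"
      by (rule norm_mm_sq)
    also have "\<dots> \<le> ?K * c * norm (mpow X k - mpow Y k)"
      using K assms(1) by (intro mult_right_mono) auto
    also have "\<dots> \<le> ?a * (?K * ?N * ?d * (2 * (?a + 1)) ^ k)"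
      using Suc a by (intro mult_left_mono) auto
    finally show ?thesis .
  qed
  have 2: "norm ((X - Y) ** mpow Y k) \<le> ?K * ?N * ?d * (2 * (?a + 1)) ^ k"
  proof -
    have "norm ((X - Y) ** mpow Y k) \<le> ?K * ?d * norm (mpow Y k)"
      by (rule norm_mm_sq)
    also have "\<dots> \<le> ?K * ?d * (?N * (?K * norm Y) ^ k)"
      using K by (intro mult_left_mono mpow_bound) auto
    also have "\<dots> \<le> ?K * ?d * (?N * (2 * (?a + 1)) ^ k)"
    proof -
      have "?K * norm Y \<le> ?K * c" using K assms(2) by (intro mult_left_mono) auto
      then have "?K * norm Y \<le> 2 * (?a + 1)" using a by (smt (verit))
      then show ?thesis using K N by (intro mult_left_mono power_mono) auto
    qed
    finally show ?thesis by (simp add: mult_ac)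
  qed
  have "norm (mpow X (Suc k) - mpow Y (Suc k))
      \<le> ?a * (?K * ?N * ?d * (2 * (?a + 1)) ^ k) + ?K * ?N * ?d * (2 * (?a + 1)) ^ k"
    unfolding eq by (rule order_trans[OF norm_triangle_ineq add_mono[OF 1 2]])
  also have "\<dots> = (?a + 1) * (?K * ?N * ?d * (2 * (?a + 1)) ^ k)" by (simp add: algebra_simps)
  also have "\<dots> \<le> (2 * (?a + 1)) * (?K * ?N * ?d * (2 * (?a + 1)) ^ k)"
  proof (rule mult_right_mono)
    show "0 \<le> ?K * ?N * ?d * (2 * (?a + 1)) ^ k"
      using K N a by (intro mult_nonneg_nonneg zero_le_power) auto
  qed (use a in \<open>simp add: mult.commute[of c]\<close>)
  finally show ?case by (simp add: mult_ac)
qed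

lemma mexp_summable_bound:
  fixes X :: "real^'n^'n"
  shows "summable (\<lambda>k. (1 / fact k) *\<^sub>R mpow X k)"
    "norm (mexp X) \<le> N1 TYPE('n) * exp (K0 TYPE('n) * norm X)"
proof -
  have b: "norm ((1 / fact k) *\<^sub>R mpow X k) \<le> N1 TYPE('n) * ((K0 TYPE('n) * norm X) ^ k / fact k)" for k
    using mpow_bound[of X k] by (simp add: divide_right_mono)
  show "summable (\<lambda>k. (1 / fact k) *\<^sub>R mpow X k)" by (rule exp_series_bound(1)[OF b])
  show "norm (mexp X) \<le> N1 TYPE('n) * exp (K0 TYPE('n) * norm X)"
    unfolding mexp_def by (rule exp_series_bound(2)[OF b])
qed

lemma mexp_lipschitz:
  fixes X Y :: "real^'n^'n"
  assumes "norm X \<le> c" "norm Y \<le> c"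
  shows "norm (mexp X - mexp Y) \<le> (K0 TYPE('n) * N1 TYPE('n) * exp (2 * (K0 TYPE('n) * c + 1))) * norm (X - Y)"
proof -
  have eq: "mexp X - mexp Y = (\<Sum>k. (1 / fact k) *\<^sub>R (mpow X k - mpow Y k))"
    unfolding mexp_def
    by (subst suminf_diff[OF mexp_summable_bound(1) mexp_summable_bound(1)])
       (simp add: scaleR_diff_right)
  have b: "norm ((1 / fact k) *\<^sub>R (mpow X k - mpow Y k))
      \<le> (K0 TYPE('n) * N1 TYPE('n) * norm (X - Y)) * ((2 * (K0 TYPE('n) * c + 1)) ^ k / fact k)" for k
    using mpow_diff_bound[OF assms, of k] by (simp add: divide_right_mono)
  show ?thesis unfolding eq using exp_series_bound(2)[OF b] by (simp add: mult_ac)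
qed

lemma mexp_continuous: "continuous_on UNIV (mexp :: real^'n^'n \<Rightarrow> real^'n^'n)"
proof (rule continuous_at_imp_continuous_on, intro ballI)
  fix X :: "real^'n^'n"
  let ?c = "norm X + 1"
  let ?L = "K0 TYPE('n) * N1 TYPE('n) * exp (2 * (K0 TYPE('n) * ?c + 1))"
  have L: "?L \<ge> 0" using K0_pos[where 'n='n] N1_nonneg[where 'n='n] by simp
  show "isCont mexp X"
  proof (rule continuous_at_eps_delta[THEN iffD2], intro allI impI)
    fix e :: real assume e: "e > 0"
    show "\<exists>d>0. \<forall>Y. dist Y X < d \<longrightarrow> dist (mexp Y) (mexp X) < e"
    proof (intro exI[of _ "min 1 (e / (?L + 1))"] conjI allI impI)
      show "min 1 (e / (?L + 1)) > 0" using e L by simp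
      fix Y assume d: "dist Y X < min 1 (e / (?L + 1))"
      have nY: "norm Y \<le> ?c" using d norm_triangle_ineq2[of Y X] by (simp add: dist_norm)
      have "dist (mexp Y) (mexp X) \<le> ?L * norm (Y - X)"
        unfolding dist_norm by (rule mexp_lipschitz[OF nY]) simp
      also have "\<dots> \<le> ?L * (e / (?L + 1))"
        using d L by (intro mult_left_mono) (auto simp: dist_norm)
      also have "\<dots> < e" using e L by (simp add: field_simps)
      finally show "dist (mexp Y) (mexp X) < e" .
    qed
  qed
qed

lemma mexp_zero: "mexp (0::real^'n^'n) = mat 1"
proof -
  have "(\<lambda>k. (1 / fact k) *\<^sub>R mpow (0::real^'n^'n) k) = (\<lambda>k. if k = 0 then mat 1 else 0)"
    by (rule ext, case_tac k) auto
  then show ?thesis unfolding mexp_def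
    using sums_unique[OF sums_single[of 0 "\<lambda>_. mat 1 :: real^'n^'n"]] by simp
qed



lemma continuous_on_det[continuous_intros]:
  fixes f :: "'a::topological_space \<Rightarrow> real^'n^'n"
  assumes "continuous_on S f"
  shows "continuous_on S (\<lambda>x. det (f x))"
  unfolding det_def by (intro continuous_intros assms)

definition cmat :: "'n \<Rightarrow> 'n \<Rightarrow> real^'n^'n \<Rightarrow> real^'n^'n" where
  "cmat k j X = (\<chi> i l. if l = k then (if i = j then 1 else 0) else X$i$l)"

lemma continuous_cmat: "continuous_on S (\<lambda>x. f x) \<Longrightarrow> continuous_on S (\<lambda>x. cmat k j (f x))"
  unfolding cmat_def
proof (intro continuous_on_vec_lambda)
  fix i l assume f: "continuous_on S f"
  show "continuous_on S (\<lambda>x. if l = k then (if i = j then 1 else 0) else f x $ i $ l)"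
    by (cases "l = k") (auto intro!: continuous_intros f)
qed

lemma matrix_inv_formula:
  fixes X :: "real^'n^'n"
  assumes d: "det X \<noteq> 0"
  shows "matrix_inv X = (\<chi> k j. det (cmat k j X) / det X)"
proof -
  have inv: "invertible X" using d invertible_det_nz by blast
  have XX: "X ** matrix_inv X = mat 1"
    using inv unfolding invertible_def matrix_inv_def by (rule someI_ex[THEN conjunct1])
  show ?thesis
  proof (subst vec_eq_iff, intro allI)
    fix k
    show "matrix_inv X $ k = (\<chi> k j. det (cmat k j X) / det X) $ k"
    proof (subst vec_eq_iff, intro allI)
      fix j
      have "X *v (matrix_inv X *v axis j 1) = axis j 1"
        by (simp add: matrix_vector_mul_assoc XX)
      then have "matrix_inv X *v axis j 1 = (\<chi> k. det(\<chi> i l. if l=k then (axis j 1 :: real^'n)$i else X$i$l) / det X)"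
        using cramer[OF d] by blast
      then have "(matrix_inv X *v axis j 1) $ k = det(\<chi> i l. if l=k then (axis j 1 :: real^'n)$i else X$i$l) / det X"
        by simp
      moreover have "(matrix_inv X *v axis j 1) $ k = matrix_inv X $ k $ j"
        by (simp add: matrix_vector_mult_def axis_def if_distrib cong: if_cong)
      moreover have "(\<chi> i l. if l=k then (axis j 1 :: real^'n)$i else X$i$l) = cmat k j X"
        by (simp add: cmat_def axis_def vec_eq_iff)
      ultimately show "matrix_inv X $ k $ j = (\<chi> k j. det (cmat k j X) / det X) $ k $ j"
        by simp
    qed
  qed
qed

lemma pos_def_det: "pos_def (X::real^'n^'n) \<Longrightarrow> det X \<noteq> 0"
proof -
  assume p: "pos_def X"
  have "\<forall>x. X *v x = 0 \<longrightarrow> x = 0"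
  proof (intro allI impI)
    fix x assume "X *v x = 0"
    then show "x = 0" using p unfolding pos_def_def by (metis inner_zero_right less_irrefl)
  qed
  then have "\<exists>B. B ** X = mat 1" using matrix_left_invertible_ker by blast
  then have "invertible X" using invertible_left_inverse by blast
  then show ?thesis using invertible_det_nz by blast
qed

lemma continuous_on_matrix_inv:
  fixes f :: "'a::topological_space \<Rightarrow> real^'n^'n"
  assumes "continuous_on S f" "\<And>x. x \<in> S \<Longrightarrow> det (f x) \<noteq> 0"
  shows "continuous_on S (\<lambda>x. matrix_inv (f x))"
proof -
  have "continuous_on S (\<lambda>x. (\<chi> k j. det (cmat k j (f x)) / det (f x)))"
    using assms by (intro continuous_on_vec_lambda continuous_intros continuous_cmat) auto
  then show ?thesis
    by (rule continuous_on_cong[THEN iffD1, rotated 2]) (auto simp: matrix_inv_formula assms(2))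
qed



lemma LBINT_Ioo: "(a::real) \<le> b \<Longrightarrow> (LBINT x=a..b. f x) = (LINT x:{a<..<b}|lborel. f x)"
  by (simp add: interval_integral_Ioo)

lemma LBINT_HK:
  fixes g :: "real \<Rightarrow> 'a::euclidean_space"
  assumes g: "set_integrable lborel {a<..<b} g" and "a \<le> t" "t \<le> s" "s \<le> b"
  shows "(LBINT x=t..s. g x) = integral {t..s} g"
proof -
  have "set_integrable lborel {t<..<s} g"
    by (rule set_integrable_subset[OF g]) (use assms in auto)
  then show ?thesis using assms
    by (simp add: LBINT_Ioo set_borel_integral_eq_integral(2) integral_open_interval_real)
qed

lemma HK_integrable:
  fixes g :: "real \<Rightarrow> 'a::euclidean_space"
  assumes g: "set_integrable lborel {a<..<b} g"
  shows "g integrable_on {a..b}"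
  using set_borel_integral_eq_integral(1)[OF g] integrable_on_Icc_iff_Ioo by blast

lemma indef_cont:
  fixes g :: "real \<Rightarrow> 'a::euclidean_space"
  assumes g: "set_integrable lborel {a<..<b} g"
  shows "continuous_on {a..b} (\<lambda>s. LBINT x=a..s. g x)"
proof -
  have "continuous_on {a..b} (\<lambda>s. integral {a..s} g)"
    by (rule indefinite_integral_continuous_1[OF HK_integrable[OF g]])
  then show ?thesis
    by (rule continuous_on_cong[THEN iffD1, rotated 2]) (auto simp: LBINT_HK[OF g])
qed

lemma indef_diff:
  fixes g :: "real \<Rightarrow> 'a::euclidean_space"
  assumes g: "set_integrable lborel {a<..<b} g" and "a \<le> t" "t \<le> s" "s \<le> b"
  shows "(LBINT x=t..s. g x) = (LBINT x=a..s. g x) - (LBINT x=a..t. g x)"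
proof -
  have i: "g integrable_on {a..s}"
    by (rule integrable_on_subinterval[OF HK_integrable[OF g]]) (use assms in auto)
  show ?thesis using assms Henstock_Kurzweil_Integration.integral_combine[OF \<open>a \<le> t\<close> \<open>t \<le> s\<close> i]
    by (simp add: LBINT_HK[OF g] algebra_simps)
qed

lemma cont_mm: "continuous_on UNIV (\<lambda>x. fst x ** (snd x :: real^'c^'k) :: real^'c^'r)"
  by (intro bounded_bilinear.continuous_on[OF bb_mm] continuous_intros)

lemma sbm_mm:
  fixes f :: "'a \<Rightarrow> real^'k^'r" and g :: "'a \<Rightarrow> real^'c^'k"
  assumes "set_borel_measurable M X f" "set_borel_measurable M X g"
  shows "set_borel_measurable M X (\<lambda>x. f x ** g x)"
proof -
  have eq: "(\<lambda>x. indicator X x *\<^sub>R (f x ** g x)) = (\<lambda>x. (indicator X x *\<^sub>R f x) ** (indicator X x *\<^sub>R g x))"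
    by (auto simp: indicator_def mm_scale_left mm_scale_right)
  show ?thesis unfolding set_borel_measurable_def eq
    by (rule borel_measurable_continuous_Pair[OF assms[unfolded set_borel_measurable_def] cont_mm])
qed

lemma sbm_add:
  fixes f g :: "'a \<Rightarrow> 'b::{real_normed_vector,second_countable_topology}"
  assumes "set_borel_measurable M X f" "set_borel_measurable M X g"
  shows "set_borel_measurable M X (\<lambda>x. f x + g x)"
  using assms unfolding set_borel_measurable_def by (auto simp: scaleR_add_right intro!: borel_measurable_add)

lemma sbm_diff:
  fixes f g :: "'a \<Rightarrow> 'b::{real_normed_vector,second_countable_topology}"
  assumes "set_borel_measurable M X f" "set_borel_measurable M X g"
  shows "set_borel_measurable M X (\<lambda>x. f x - g x)"
  using assms unfolding set_borel_measurable_def by (auto simp: scaleR_diff_right intro!: borel_measurable_diff)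

lemma sbm_transpose:
  fixes f :: "'a \<Rightarrow> real^'c^'r"
  assumes "set_borel_measurable M X f"
  shows "set_borel_measurable M X (\<lambda>x. transpose (f x))"
proof -
  have eq: "(\<lambda>x. indicator X x *\<^sub>R transpose (f x)) = (\<lambda>x. transpose (indicator X x *\<^sub>R f x))"
    by (simp add: transpose_scalar)
  show ?thesis unfolding set_borel_measurable_def eq
    by (rule borel_measurable_continuous_on[OF linear_continuous_on[OF bl_transpose]
          assms[unfolded set_borel_measurable_def]])
qed

lemma sbm_cont:
  fixes f :: "real \<Rightarrow> 'b::real_normed_vector"
  assumes "X \<in> sets borel" "continuous_on Y f" "X \<subseteq> Y"
  shows "set_borel_measurable lborel X f"
  using set_measurable_continuous_on[OF assms(1) continuous_on_subset[OF assms(2,3)]]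
  by (simp add: set_borel_measurable_def)

lemma sbm_subset:
  fixes f :: "'a \<Rightarrow> 'b::{real_normed_vector,second_countable_topology}"
  assumes "set_borel_measurable M Y f" "X \<in> sets M" "X \<subseteq> Y"
  shows "set_borel_measurable M X f"
proof -
  have eq: "(\<lambda>x. indicator X x *\<^sub>R f x) = (\<lambda>x. indicator X x *\<^sub>R (indicator Y x *\<^sub>R f x))"
    using assms(3) by (auto simp: indicator_def fun_eq_iff)
  have "(\<lambda>x. indicator X x *\<^sub>R (indicator Y x *\<^sub>R f x)) \<in> borel_measurable M"
  proof (rule borel_measurable_scaleR)
    show "(\<lambda>x. indicator X x :: real) \<in> borel_measurable M" using assms(2) by simp
  qed (use assms(1) in \<open>simp add: set_borel_measurable_def\<close>)
  then show ?thesis unfolding set_borel_measurable_def eq .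
qed

lemma sbm_integrable:
  fixes f :: "real \<Rightarrow> 'b::{banach, second_countable_topology}"
  assumes "set_integrable lborel X f"
  shows "set_borel_measurable lborel X f"
  using assms unfolding set_integrable_def set_borel_measurable_def by (rule borel_measurable_integrable)



lemma norm_transpose: "norm (transpose (X::real^'c^'r)) = norm X"
proof -
  have sq: "norm (Y::real^'c^'r) = sqrt (\<Sum>i\<in>UNIV. \<Sum>j\<in>UNIV. (Y$i$j)^2)" for Y :: "real^'c^'r"
    unfolding norm_vec_def L2_set_def
    by (simp add: real_norm_def power2_abs sum_nonneg)
  have sq2: "norm (Y::real^'r^'c) = sqrt (\<Sum>i\<in>UNIV. \<Sum>j\<in>UNIV. (Y$i$j)^2)" for Y :: "real^'r^'c"
    unfolding norm_vec_def L2_set_def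
    by (simp add: real_norm_def power2_abs sum_nonneg)
  show ?thesis unfolding sq sq2 transpose_def by (simp add: sum.swap[of _ "UNIV::'c set"])
qed

lemma norm_mm_N:
  fixes X :: "real^'k^'r" and Y :: "real^'c^'k"
  assumes "CARD('r) \<le> N" "CARD('c) \<le> N" "CARD('k) \<le> N"
  shows "norm (X ** Y) \<le> real N ^ 3 * norm X * norm Y"
proof -
  have "real (CARD('r) * CARD('c) * CARD('k)) \<le> real N ^ 3"
  proof -
    have "CARD('r) * CARD('c) * CARD('k) \<le> N * N * N" using assms by (intro mult_le_mono) auto
    then show ?thesis by (simp add: power3_eq_cube del: of_nat_mult flip: of_nat_mult)
  qed
  then have "real (CARD('r) * CARD('c) * CARD('k)) * norm X * norm Y \<le> real N ^ 3 * norm X * norm Y"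
    by (intro mult_right_mono) auto
  then show ?thesis using norm_mm_le[of X Y] by linarith
qed

definition nsup :: "('a \<Rightarrow> 'b::real_normed_vector) \<Rightarrow> 'a set \<Rightarrow> real" where
  "nsup f K = Sup ((\<lambda>x. norm (f x)) ` K)"

lemma nsup_bound:
  fixes f :: "'a::topological_space \<Rightarrow> 'b::real_normed_vector"
  assumes "compact K" "continuous_on K f" "x \<in> K"
  shows "norm (f x) \<le> nsup f K"
proof -
  have "compact ((\<lambda>x. norm (f x)) ` K)"
    by (rule compact_continuous_image[OF continuous_on_norm[OF assms(2)] assms(1)])
  then have "bdd_above ((\<lambda>x. norm (f x)) ` K)"
    by (intro bounded_imp_bdd_above compact_imp_bounded)
  then show ?thesis unfolding nsup_def using assms(3) by (rule cSUP_upper2) auto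
qed

lemma nsup_nonneg:
  fixes f :: "'a::topological_space \<Rightarrow> 'b::real_normed_vector"
  assumes "compact K" "continuous_on K f" "x \<in> K"
  shows "0 \<le> nsup f K"
  using nsup_bound[OF assms] norm_ge_zero order_trans by blast

definition kapp :: "'n::finite itself \<Rightarrow> 'm::finite itself \<Rightarrow> real" where
  "kapp _ _ = real (CARD('n) + CARD('m)) ^ 3"

lemma kapp_pos: "kapp TYPE('a::finite) TYPE('b::finite) > 0"
proof -
  have "0 < real CARD('a)" "0 \<le> real CARD('b)" by simp_all
  then have "0 < real CARD('a) + real CARD('b)" by linarith
  then show ?thesis unfolding kapp_def by simp
qed

locale ric =
  fixes T :: real and A :: "real \<Rightarrow> real^'n^'n" and B :: "real \<Rightarrow> real^'m^'n"
    and M Mt :: "real \<Rightarrow> real \<Rightarrow> real^'m^'m"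
    and Q Qt :: "real \<Rightarrow> real \<Rightarrow> real^'n^'n"
    and S St :: "real \<Rightarrow> real \<Rightarrow> real^'n^'m"
    and G Gd :: "real \<Rightarrow> real^'n^'n"
  assumes T_pos: "T > 0"
    and A_L1: "set_integrable lborel {0<..<T} A"
    and B_meas: "set_borel_measurable lborel {0<..<T} B"
    and B_L2: "set_integrable lborel {0<..<T} (\<lambda>t. (norm (B t))\<^sup>2)"
    and M_cont: "continuous_on ({0..T} \<times> {0..T}) (\<lambda>(t, s). M t s)"
    and M_pd: "\<And>t s. t \<in> {0..T} \<Longrightarrow> s \<in> {0..T} \<Longrightarrow> pos_def (M t s)"
    and Q_cont: "continuous_on ({0..T} \<times> {0..T}) (\<lambda>(t, s). Q t s)"
    and S_cont: "continuous_on ({0..T} \<times> {0..T}) (\<lambda>(t, s). S t s)"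
    and Gd_cont: "continuous_on {0..T} Gd"
    and Qt_cont: "continuous_on ({0..T} \<times> {0..T}) (\<lambda>(t, s). Qt t s)"
    and St_cont: "continuous_on ({0..T} \<times> {0..T}) (\<lambda>(t, s). St t s)"
    and Mt_cont: "continuous_on ({0..T} \<times> {0..T}) (\<lambda>(t, s). Mt t s)"
begin


definition w :: "real \<Rightarrow> real" where "w t = 1 + (norm (B t))\<^sup>2"

lemma w_ge1: "w t \<ge> 1" by (simp add: w_def)
lemma two_b_le: "2 * norm (B t) \<le> 1 + (norm (B t))\<^sup>2"
proof -
  have "0 \<le> (norm (B t) - 1)\<^sup>2" by simp
  then show ?thesis by (simp add: power2_diff)
qed
lemma normB_le_w: "norm (B t) \<le> w t"
  using two_b_le[of t] norm_ge_zero[of "B t"] unfolding w_def by linarith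
lemma one_normB_sq: "(1 + norm (B t))\<^sup>2 \<le> 2 * w t"
  using two_b_le[of t] unfolding w_def by (simp add: power2_sum)
lemma one_normB_le: "1 + norm (B t) \<le> 2 * w t"
  using normB_le_w[of t] w_ge1[of t] by linarith

lemma set_integrable_one: "set_integrable lborel {0<..<T} (\<lambda>t. 1::real)"
proof -
  have "set_integrable lborel {0..T} (\<lambda>t. 1::real)"
    by (rule borel_integrable_atLeastAtMost') (rule continuous_on_const)
  then show ?thesis by (rule set_integrable_subset) auto
qed

lemma w_int: "set_integrable lborel {0<..<T} w"
  unfolding w_def using set_integrable_one B_L2 by (rule set_integral_add(1))

lemma diag_cont:
  assumes "continuous_on ({0..T} \<times> {0..T}) (\<lambda>(t, s). X t s)"
  shows "continuous_on {0..T} (\<lambda>t. X t t)"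
proof -
  have "continuous_on {0..T} (\<lambda>t. (\<lambda>(t, s). X t s) (t, t))"
    by (rule continuous_on_compose2[OF assms]) (auto intro!: continuous_intros)
  then show ?thesis by simp
qed

lemma snd_cont:
  assumes "continuous_on ({0..T} \<times> {0..T}) (\<lambda>(t, s). X t s)" "t \<in> {0..T}"
  shows "continuous_on {0..T} (\<lambda>s. X t s)"
proof -
  have "continuous_on {0..T} (\<lambda>s. (\<lambda>(t, s). X t s) (t, s))"
    by (rule continuous_on_compose2[OF assms(1)]) (use assms(2) in \<open>auto intro!: continuous_intros\<close>)
  then show ?thesis by simp
qed

definition Minv :: "real \<Rightarrow> real^'m^'m" where "Minv t = matrix_inv (M t t)"

lemma Minv_cont: "continuous_on {0..T} Minv"
  unfolding Minv_def
  by (rule continuous_on_matrix_inv[OF diag_cont[OF M_cont]]) (simp add: pos_def_det M_pd)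

lemma II_compact: "compact ({0..T} \<times> {0..T})" by (intro compact_Times compact_Icc)

definition "cM = nsup Minv {0..T}"
definition "cQ = nsup (\<lambda>t. Q t t) {0..T}"
definition "cS = nsup (\<lambda>t. S t t) {0..T}"
definition "cGd = nsup Gd {0..T}"
definition "cQt = nsup (\<lambda>(t,s). Qt t s) ({0..T} \<times> {0..T})"
definition "cSt = nsup (\<lambda>(t,s). St t s) ({0..T} \<times> {0..T})"
definition "cMt = nsup (\<lambda>(t,s). Mt t s) ({0..T} \<times> {0..T})"

lemma T_in: "T \<in> {0..T}" using T_pos by simp

lemma cM: "t \<in> {0..T} \<Longrightarrow> norm (Minv t) \<le> cM" "0 \<le> cM"
  unfolding cM_def using nsup_bound[OF compact_Icc Minv_cont] nsup_nonneg[OF compact_Icc Minv_cont T_in] by auto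
lemma cQ: "t \<in> {0..T} \<Longrightarrow> norm (Q t t) \<le> cQ" "0 \<le> cQ"
  unfolding cQ_def using nsup_bound[OF compact_Icc diag_cont[OF Q_cont]] nsup_nonneg[OF compact_Icc diag_cont[OF Q_cont] T_in] by auto
lemma cS: "t \<in> {0..T} \<Longrightarrow> norm (S t t) \<le> cS" "0 \<le> cS"
  unfolding cS_def using nsup_bound[OF compact_Icc diag_cont[OF S_cont]] nsup_nonneg[OF compact_Icc diag_cont[OF S_cont] T_in] by auto
lemma cGd: "t \<in> {0..T} \<Longrightarrow> norm (Gd t) \<le> cGd" "0 \<le> cGd"
  unfolding cGd_def using nsup_bound[OF compact_Icc Gd_cont] nsup_nonneg[OF compact_Icc Gd_cont T_in] by auto
lemma TT_in: "(T, T) \<in> {0..T} \<times> {0..T}" using T_pos by simp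
lemma cQt: "t \<in> {0..T} \<Longrightarrow> s \<in> {0..T} \<Longrightarrow> norm (Qt t s) \<le> cQt" "0 \<le> cQt"
  unfolding cQt_def using nsup_bound[OF II_compact Qt_cont, of "(t,s)"] nsup_nonneg[OF II_compact Qt_cont TT_in]
  by auto
lemma cSt: "t \<in> {0..T} \<Longrightarrow> s \<in> {0..T} \<Longrightarrow> norm (St t s) \<le> cSt" "0 \<le> cSt"
  unfolding cSt_def using nsup_bound[OF II_compact St_cont, of "(t,s)"] nsup_nonneg[OF II_compact St_cont TT_in]
  by auto
lemma cMt: "t \<in> {0..T} \<Longrightarrow> s \<in> {0..T} \<Longrightarrow> norm (Mt t s) \<le> cMt" "0 \<le> cMt"
  unfolding cMt_def using nsup_bound[OF II_compact Mt_cont, of "(t,s)"] nsup_nonneg[OF II_compact Mt_cont TT_in]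
  by auto

end



lemma sint_bound:
  fixes f :: "real \<Rightarrow> 'b::{banach, second_countable_topology}"
  assumes "set_integrable lborel X h" "set_borel_measurable lborel X f"
    "\<And>x. x \<in> X \<Longrightarrow> norm (f x) \<le> c * h x"
  shows "set_integrable lborel X f"
proof (rule set_integrable_bound[where f = "\<lambda>x. c * h x"])
  show "set_integrable lborel X (\<lambda>x. c * h x)" using assms(1) by simp
  show "AE x in lborel. x \<in> X \<longrightarrow> norm (f x) \<le> norm (c * h x)"
    using assms(3) by (auto intro!: AE_I2 order_trans[OF _ abs_ge_self])
qed (rule assms(2))

lemma sint_norm_le:
  fixes f :: "real \<Rightarrow> 'b::{banach, second_countable_topology}"
  assumes "set_integrable lborel X f" "set_integrable lborel X h"
    "\<And>x. x \<in> X \<Longrightarrow> norm (f x) \<le> h x"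
  shows "norm (LINT x:X|lborel. f x) \<le> (LINT x:X|lborel. h x)"
proof -
  have "norm (LINT x:X|lborel. f x) \<le> (LINT x:X|lborel. norm (f x))"
    by (rule set_integral_norm_bound[OF assms(1)])
  also have "\<dots> \<le> (LINT x:X|lborel. h x)"
    by (rule set_integral_mono[OF set_integrable_norm[OF assms(1)] assms(2) assms(3)])
  finally show ?thesis .
qed

context ric begin

definition gg :: "(real \<Rightarrow> real^'n^'n) \<Rightarrow> real \<Rightarrow> real^'n^'n" where
  "gg P t = A t - B t ** Gam M B S P t"
definition IG :: "(real \<Rightarrow> real^'n^'n) \<Rightarrow> real \<Rightarrow> real^'n^'n" where
  "IG P s = (LBINT x=0..s. gg P x)"
definition Phi :: "(real \<Rightarrow> real^'n^'n) \<Rightarrow> real \<Rightarrow> real \<Rightarrow> real^'n^'n" where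
  "Phi P t s = mexp (IG P s - IG P t)"

definition "cP P = nsup P {0..T}"
definition "cG P = kapp TYPE('n) TYPE('m) * cM * (kapp TYPE('n) TYPE('m) * cP P + cS)"

lemma Gam_eq: "Gam M B S P t = Minv t ** (transpose (B t) ** P t + S t t)"
  by (simp add: Gam_def Minv_def)

lemma mmk:
  fixes X :: "real^'b^'a" and Y :: "real^'c^'b"
  assumes "CARD('a) \<le> CARD('n) + CARD('m)" "CARD('b) \<le> CARD('n) + CARD('m)" "CARD('c) \<le> CARD('n) + CARD('m)"
  shows "norm (X ** Y) \<le> kapp TYPE('n) TYPE('m) * norm X * norm Y"
  unfolding kapp_def using norm_mm_N[where X=X and Y=Y, OF assms(1) assms(3) assms(2)] by simp

lemma Iopen_sets: "{a<..<b::real} \<in> sets lborel" by simp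

lemma J_sub: "{0<..<T} \<subseteq> {0..T}" by auto

lemmas kap = kapp_pos[where 'a='n and 'b='m]

context
  fixes P :: "real \<Rightarrow> real^'n^'n"
  assumes P_cont: "continuous_on {0..T} P"
begin

lemma cP: "t \<in> {0..T} \<Longrightarrow> norm (P t) \<le> cP P" "0 \<le> cP P"
  unfolding cP_def using nsup_bound[OF compact_Icc P_cont] nsup_nonneg[OF compact_Icc P_cont T_in] by auto

lemma cG_nonneg: "0 \<le> cG P"
  unfolding cG_def using kap cM(2) cP(2) cS(2) by simp

lemma Gam_bound:
  assumes t: "t \<in> {0..T}"
  shows "norm (Gam M B S P t) \<le> cG P * (1 + norm (B t))"
proof -
  let ?k = "kapp TYPE('n) TYPE('m)"
  have "norm (transpose (B t) ** P t) \<le> ?k * norm (B t) * cP P"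
    using mmk[of "transpose (B t)" "P t"] kap cP(1)[OF t]
    by (simp add: norm_transpose) (smt (verit, best) mult_left_mono mult_nonneg_nonneg norm_ge_zero)
  then have 1: "norm (transpose (B t) ** P t + S t t) \<le> ?k * cP P * norm (B t) + cS"
    using cS(1)[OF t] norm_triangle_ineq[of "transpose (B t) ** P t" "S t t"] by (simp add: mult_ac)
  also have "\<dots> \<le> (?k * cP P + cS) * (1 + norm (B t))"
    using kap cP(2) cS(2) by (simp add: algebra_simps)
  finally have 2: "norm (transpose (B t) ** P t + S t t) \<le> (?k * cP P + cS) * (1 + norm (B t))" .
  have "norm (Gam M B S P t) \<le> ?k * norm (Minv t) * norm (transpose (B t) ** P t + S t t)"
    unfolding Gam_eq by (rule mmk) simp_all
  also have "\<dots> \<le> ?k * cM * ((?k * cP P + cS) * (1 + norm (B t)))"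
    using kap cM(1)[OF t] cM(2) 2 by (intro mult_mono) auto
  finally show ?thesis by (simp add: cG_def mult_ac)
qed

lemma Gam_sbm: "set_borel_measurable lborel {0<..<T} (Gam M B S P)"
proof -
  have "set_borel_measurable lborel {0<..<T} (\<lambda>t. Minv t ** (transpose (B t) ** P t + S t t))"
    by (intro sbm_mm sbm_add sbm_transpose B_meas sbm_cont[OF _ Minv_cont J_sub]
        sbm_cont[OF _ P_cont J_sub] sbm_cont[OF _ diag_cont[OF S_cont] J_sub]) simp_all
  then show ?thesis unfolding Gam_eq[abs_def] .
qed

lemma gg_sbm: "set_borel_measurable lborel {0<..<T} (gg P)"
  unfolding gg_def[abs_def]
  by (intro sbm_diff sbm_mm Gam_sbm B_meas sbm_integrable[OF A_L1])

lemma gg_bound: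
  assumes t: "t \<in> {0..T}"
  shows "norm (gg P t) \<le> norm (A t) + 2 * kapp TYPE('n) TYPE('m) * cG P * w t"
proof -
  let ?k = "kapp TYPE('n) TYPE('m)"
  have "norm (B t ** Gam M B S P t) \<le> ?k * norm (B t) * norm (Gam M B S P t)"
    by (rule mmk) simp_all
  also have "\<dots> \<le> ?k * (1 + norm (B t)) * (cG P * (1 + norm (B t)))"
    using kap Gam_bound[OF t] by (intro mult_mono) auto
  also have "\<dots> = ?k * cG P * (1 + norm (B t))\<^sup>2" by (simp add: power2_eq_square mult_ac)
  also have "\<dots> \<le> ?k * cG P * (2 * w t)"
    using kap cG_nonneg one_normB_sq by (intro mult_left_mono) auto
  finally show ?thesis unfolding gg_def using norm_triangle_ineq4[of "A t" "B t ** Gam M B S P t"]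
    by (simp add: mult_ac)
qed

lemma gg_int: "set_integrable lborel {0<..<T} (gg P)"
proof (rule sint_bound[where c=1])
  show "set_integrable lborel {0<..<T} (\<lambda>t. norm (A t) + 2 * kapp TYPE('n) TYPE('m) * cG P * w t)"
    using set_integrable_norm[OF A_L1] w_int by (intro set_integral_add(1)) auto
qed (use gg_sbm gg_bound in auto)

lemma IG_cont: "continuous_on {0..T} (IG P)"
  unfolding IG_def[abs_def] using indef_cont[OF gg_int] by (simp add: zero_ereal_def)

definition "cIG = nsup (IG P) {0..T}"
lemma cIG: "t \<in> {0..T} \<Longrightarrow> norm (IG P t) \<le> cIG" "0 \<le> cIG"
  unfolding cIG_def using nsup_bound[OF compact_Icc IG_cont] nsup_nonneg[OF compact_Icc IG_cont T_in] by auto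

definition "cE = N1 TYPE('n) * exp (K0 TYPE('n) * (2 * cIG))"

lemma Phi_bound:
  assumes "t \<in> {0..T}" "s \<in> {0..T}"
  shows "norm (Phi P t s) \<le> cE"
proof -
  have "norm (IG P s - IG P t) \<le> 2 * cIG"
    using cIG(1)[OF assms(1)] cIG(1)[OF assms(2)] norm_triangle_ineq4[of "IG P s" "IG P t"] by linarith
  then have "exp (K0 TYPE('n) * norm (IG P s - IG P t)) \<le> exp (K0 TYPE('n) * (2 * cIG))"
    using K0_pos[where 'n='n] by simp
  then show ?thesis unfolding Phi_def cE_def
    using mexp_summable_bound(2)[of "IG P s - IG P t"] N1_nonneg[where 'n='n]
    by (meson mult_left_mono order_trans)
qed

lemma cE_nonneg: "0 \<le> cE"
  using Phi_bound[OF T_in T_in] norm_ge_zero order_trans by blast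

lemma EE_eq:
  assumes "0 \<le> t" "t \<le> s" "s \<le> T"
  shows "EEmat A M B S P s t = Phi P t s"
proof -
  have "(LBINT x=t..s. A x - B x ** Gam M B S P x) = (LBINT x=t..s. gg P x)"
    by (simp add: gg_def)
  also have "\<dots> = IG P s - IG P t"
    unfolding IG_def using indef_diff[OF gg_int, of t s] assms by (simp add: zero_ereal_def)
  finally show ?thesis unfolding EEmat_def Phi_def by simp
qed

lemma Phi_cont2: "continuous_on ({0..T} \<times> {0..T}) (\<lambda>x. Phi P (fst x) (snd x))"
  unfolding Phi_def
  by (rule continuous_on_compose2[OF mexp_continuous])
     (auto intro!: continuous_intros continuous_on_compose2[OF IG_cont])

lemma Phi_cont_snd: "t \<in> {0..T} \<Longrightarrow> continuous_on {0..T} (\<lambda>s. Phi P t s)"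
  unfolding Phi_def
  by (rule continuous_on_compose2[OF mexp_continuous])
     (auto intro!: continuous_intros IG_cont)

end
end


lemma set_integral_mono_set:
  fixes f :: "real \<Rightarrow> real"
  assumes "set_integrable lborel Y f" "X \<in> sets lborel" "X \<subseteq> Y" "\<And>x. x \<in> Y \<Longrightarrow> 0 \<le> f x"
  shows "(LINT x:X|lborel. f x) \<le> (LINT x:Y|lborel. f x)"
proof -
  have iX: "set_integrable lborel X f" by (rule set_integrable_subset[OF assms(1-3)])
  show ?thesis
    unfolding set_lebesgue_integral_def
    using iX assms(1) unfolding set_integrable_def
    by (rule integral_mono) (use assms(3,4) in \<open>auto simp: indicator_def\<close>)
qed

lemma sbm_comp_snd:
  fixes f :: "real \<Rightarrow> 'b::real_normed_vector"
  assumes "set_borel_measurable lborel X f"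
  shows "set_borel_measurable (lborel \<Otimes>\<^sub>M lborel) {x. snd x \<in> X} (\<lambda>x. f (snd x))"
proof -
  have eq: "(\<lambda>x. indicator {x. snd x \<in> X} x *\<^sub>R f (snd x)) = (\<lambda>x. (\<lambda>s. indicator X s *\<^sub>R f s) (snd x))"
    by (auto simp: indicator_def)
  show ?thesis unfolding set_borel_measurable_def eq
    by (rule measurable_snd''[where M=lborel]) (use assms in \<open>simp add: set_borel_measurable_def\<close>)
qed

lemma sbm_cont2:
  fixes f :: "real \<times> real \<Rightarrow> 'b::real_normed_vector"
  assumes "X \<in> sets borel" "continuous_on Y f" "X \<subseteq> Y"
  shows "set_borel_measurable (lborel \<Otimes>\<^sub>M lborel) X f"
  using set_measurable_continuous_on[OF assms(1) continuous_on_subset[OF assms(2,3)]]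
  by (simp add: set_borel_measurable_def lborel_prod)

lemma sbm_cong:
  fixes f g :: "'a \<Rightarrow> 'b::real_normed_vector"
  assumes "set_borel_measurable N X f" "\<And>x. x \<in> X \<Longrightarrow> f x = g x"
  shows "set_borel_measurable N X g"
proof -
  have "(\<lambda>x. indicator X x *\<^sub>R f x) = (\<lambda>x. indicator X x *\<^sub>R g x)"
    using assms(2) by (intro ext) (auto simp: indicator_def)
  then show ?thesis using assms(1) unfolding set_borel_measurable_def by simp
qed

context ric begin

definition FF :: "(real \<Rightarrow> real^'n^'n) \<Rightarrow> real \<Rightarrow> real \<Rightarrow> real^'n^'n" where
  "FF P t s = Qt t s - transpose (Gam M B S P s) ** St t s - transpose (St t s) ** Gam M B S P s
           + transpose (Gam M B S P s) ** Mt t s ** Gam M B S P s"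
definition HH :: "(real \<Rightarrow> real^'n^'n) \<Rightarrow> real \<Rightarrow> real \<Rightarrow> real^'n^'n" where
  "HH P t s = transpose (Phi P t s) ** FF P t s ** Phi P t s"

definition "Wint = (LINT x:{0<..<T}|lborel. w x)"

lemma w_nonneg: "0 \<le> w t" using w_ge1[of t] by linarith

lemma w_int_le: "0 \<le> a \<Longrightarrow> b \<le> T \<Longrightarrow> (LINT x:{a<..<b}|lborel. w x) \<le> Wint"
  unfolding Wint_def by (rule set_integral_mono_set[OF w_int]) (auto intro: w_nonneg)

lemma Wint_nonneg: "0 \<le> Wint"
  unfolding Wint_def set_lebesgue_integral_def by (rule integral_nonneg_AE) (auto intro!: AE_I2 simp: indicator_def w_nonneg)

lemma w_int_sub: "0 \<le> a \<Longrightarrow> b \<le> T \<Longrightarrow> set_integrable lborel {a<..<b} w"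
  by (rule set_integrable_subset[OF w_int]) auto

lemma mmk2:
  fixes X :: "real^'b^'a" and Y :: "real^'c^'b"
  assumes "CARD('a) \<le> CARD('n) + CARD('m)" "CARD('b) \<le> CARD('n) + CARD('m)" "CARD('c) \<le> CARD('n) + CARD('m)"
    and "norm X \<le> a" "norm Y \<le> b"
  shows "norm (X ** Y) \<le> kapp TYPE('n) TYPE('m) * a * b"
proof -
  have "norm (X ** Y) \<le> kapp TYPE('n) TYPE('m) * norm X * norm Y" by (rule mmk[OF assms(1-3)])
  also have "\<dots> \<le> kapp TYPE('n) TYPE('m) * a * b"
  proof -
    have a0: "0 \<le> a" using assms(4) norm_ge_zero order_trans by blast
    show ?thesis using kap assms(4,5) a0 by (intro mult_mono) auto
  qed
  finally show ?thesis .
qed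

lemma cont_fs: "continuous_on K (\<lambda>(t, s). X t s) \<Longrightarrow> continuous_on K (\<lambda>x. X (fst x) (snd x))"
  by (simp add: case_prod_beta')

definition UU :: "(real \<times> real) set" where "UU = {x. 0 < fst x \<and> fst x < snd x \<and> snd x < T}"

lemma UU_borel: "UU \<in> sets borel"
proof -
  have "open UU" unfolding UU_def
    by (intro open_Collect_conj open_Collect_less continuous_intros)
  then show ?thesis by simp
qed
lemma UU_sets: "UU \<in> sets (lborel \<Otimes>\<^sub>M lborel)"
  unfolding lborel_prod using UU_borel by simp

lemma UU_sub: "UU \<subseteq> {0..T} \<times> {0..T}" by (auto simp: UU_def)
lemma UU_sub2: "UU \<subseteq> {x. snd x \<in> {0<..<T}}" by (auto simp: UU_def)

context
  fixes P :: "real \<Rightarrow> real^'n^'n"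
  assumes P_cont: "continuous_on {0..T} P"
begin

definition "cF = cQt + 4 * kapp TYPE('n) TYPE('m) * cSt * cG P
    + 2 * (kapp TYPE('n) TYPE('m))\<^sup>2 * cMt * (cG P)\<^sup>2"

lemma cF_nonneg: "0 \<le> cF"
  unfolding cF_def using kap cSt(2) cMt(2) cQt(2) cG_nonneg[OF P_cont] by simp

lemma FF_bound:
  assumes t: "t \<in> {0..T}" and s: "s \<in> {0..T}"
  shows "norm (FF P t s) \<le> cF * w s"
proof -
  let ?k = "kapp TYPE('n) TYPE('m)" and ?g = "cG P * (1 + norm (B s))"
  have g: "norm (Gam M B S P s) \<le> ?g" by (rule Gam_bound[OF P_cont s])
  have gT: "norm (transpose (Gam M B S P s)) \<le> ?g" using g by (simp add: norm_transpose)
  have g0: "0 \<le> ?g" using cG_nonneg[OF P_cont] by simp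
  have n2: "norm (transpose (Gam M B S P s) ** St t s) \<le> ?k * ?g * cSt"
    by (rule mmk2[OF _ _ _ gT cSt(1)[OF t s]]) simp_all
  have n3: "norm (transpose (St t s) ** Gam M B S P s) \<le> ?k * cSt * ?g"
    by (rule mmk2[OF _ _ _ _ g]) (simp_all add: norm_transpose cSt(1)[OF t s])
  have n4a: "norm (transpose (Gam M B S P s) ** Mt t s) \<le> ?k * ?g * cMt"
    by (rule mmk2[OF _ _ _ gT cMt(1)[OF t s]]) simp_all
  have n4: "norm (transpose (Gam M B S P s) ** Mt t s ** Gam M B S P s) \<le> ?k * (?k * ?g * cMt) * ?g"
    by (rule mmk2[OF _ _ _ n4a g]) simp_all
  have tri: "norm (FF P t s) \<le> norm (Qt t s) + norm (transpose (Gam M B S P s) ** St t s)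
      + norm (transpose (St t s) ** Gam M B S P s) + norm (transpose (Gam M B S P s) ** Mt t s ** Gam M B S P s)"
    unfolding FF_def by (smt (verit) norm_triangle_ineq norm_triangle_ineq4)
  have w1: "1 \<le> w s" by (rule w_ge1)
  have a: "norm (Qt t s) \<le> cQt * w s"
  proof -
    have "cQt * 1 \<le> cQt * w s" using cQt(2) w1 by (rule mult_left_mono[rotated])
    then show ?thesis using cQt(1)[OF t s] by simp
  qed
  have b1: "1 + norm (B s) \<le> 2 * w s" by (rule one_normB_le)
  have b: "?k * ?g * cSt \<le> 2 * ?k * cSt * cG P * w s"
  proof -
    have "?k * ?g * cSt = (?k * cSt * cG P) * (1 + norm (B s))" by (simp add: mult_ac)
    also have "\<dots> \<le> (?k * cSt * cG P) * (2 * w s)"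
      using kap cSt(2) cG_nonneg[OF P_cont] b1 by (intro mult_left_mono) auto
    finally show ?thesis by (simp add: mult_ac)
  qed
  have c: "?k * (?k * ?g * cMt) * ?g \<le> 2 * ?k\<^sup>2 * cMt * (cG P)\<^sup>2 * w s"
  proof -
    have "?k * (?k * ?g * cMt) * ?g = (?k\<^sup>2 * cMt * (cG P)\<^sup>2) * (1 + norm (B s))\<^sup>2"
      by (simp add: power2_eq_square mult_ac)
    also have "\<dots> \<le> (?k\<^sup>2 * cMt * (cG P)\<^sup>2) * (2 * w s)"
      using kap cMt(2) one_normB_sq by (intro mult_left_mono) auto
    finally show ?thesis by (simp add: mult_ac)
  qed
  have "norm (FF P t s) \<le> cQt * w s + 2 * ?k * cSt * cG P * w s + 2 * ?k * cSt * cG P * w s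
      + 2 * ?k\<^sup>2 * cMt * (cG P)\<^sup>2 * w s"
    using tri a n2 n3 n4 b c by (smt (verit) mult.commute mult.left_commute)
  also have "\<dots> = cF * w s" unfolding cF_def by (simp add: algebra_simps)
  finally show ?thesis .
qed

lemma HH_bound:
  assumes t: "t \<in> {0..T}" and s: "s \<in> {0..T}"
  shows "norm (HH P t s) \<le> (kapp TYPE('n) TYPE('m))\<^sup>2 * (cE P)\<^sup>2 * cF * w s"
proof -
  let ?k = "kapp TYPE('n) TYPE('m)"
  have e: "norm (Phi P t s) \<le> cE P" by (rule Phi_bound[OF P_cont t s])
  have eT: "norm (transpose (Phi P t s)) \<le> cE P" using e by (simp add: norm_transpose)
  have 1: "norm (transpose (Phi P t s) ** FF P t s) \<le> ?k * cE P * (cF * w s)"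
    by (rule mmk2[OF _ _ _ eT FF_bound[OF t s]]) simp_all
  have "norm (HH P t s) \<le> ?k * (?k * cE P * (cF * w s)) * cE P"
    unfolding HH_def by (rule mmk2[OF _ _ _ 1 e]) simp_all
  then show ?thesis by (simp add: power2_eq_square mult_ac)
qed

lemma Phi_cont_fst: "s \<in> {0..T} \<Longrightarrow> continuous_on {0..T} (\<lambda>t. Phi P t s)"
  by (rule continuous_on_compose2[OF Phi_cont2[OF P_cont], where f="\<lambda>t. (t, s)", simplified])
     (auto intro!: continuous_intros)

lemma HH_sbm_J:
  assumes t: "t \<in> {0..T}"
  shows "set_borel_measurable lborel {0<..<T} (HH P t)"
  unfolding HH_def[abs_def] FF_def
  by (intro sbm_mm sbm_add sbm_diff sbm_transpose Gam_sbm[OF P_cont]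
      sbm_cont[OF _ Phi_cont_snd[OF P_cont t] J_sub]
      sbm_cont[OF _ snd_cont[OF Qt_cont t] J_sub]
      sbm_cont[OF _ snd_cont[OF St_cont t] J_sub]
      sbm_cont[OF _ snd_cont[OF Mt_cont t] J_sub]) simp_all

lemma HH_int:
  assumes t: "t \<in> {0..T}"
  shows "set_integrable lborel {t<..<T} (HH P t)"
proof (rule sint_bound[OF w_int_sub])
  show "set_borel_measurable lborel {t<..<T} (HH P t)"
    by (rule sbm_subset[OF HH_sbm_J[OF t]]) (use t in auto)
  show "norm (HH P t x) \<le> (kapp TYPE('n) TYPE('m))\<^sup>2 * (cE P)\<^sup>2 * cF * w x" if "x \<in> {t<..<T}" for x
    using that t by (intro HH_bound) auto
qed (use t in auto)

definition "cQQ = (kapp TYPE('n) TYPE('m))\<^sup>2 * (cE P)\<^sup>2 * cGd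
   + (kapp TYPE('n) TYPE('m))\<^sup>2 * (cE P)\<^sup>2 * cF * Wint"

lemma cQQ_nonneg: "0 \<le> cQQ"
  unfolding cQQ_def using cGd(2) cF_nonneg Wint_nonneg by simp

abbreviation "QQP \<equiv> QQ T A M B S Gd Qt St Mt P"

lemma QQ_eq:
  assumes t: "t \<in> {0..T}"
  shows "QQP t = transpose (Phi P t T) ** Gd t ** Phi P t T + (LINT s:{t<..<T}|lborel. HH P t s)"
proof -
  have "(LBINT s=t..T. transpose (EEmat A M B S P s t) **
          (Qt t s - transpose (Gam M B S P s) ** St t s - transpose (St t s) ** Gam M B S P s
           + transpose (Gam M B S P s) ** Mt t s ** Gam M B S P s) ** EEmat A M B S P s t)
       = (LINT s:{t<..<T}|lborel. HH P t s)"
    using t by (auto simp: LBINT_Ioo HH_def FF_def EE_eq[OF P_cont] intro!: set_lebesgue_integral_cong)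
  then show ?thesis unfolding QQ_def using t by (simp add: EE_eq[OF P_cont])
qed

lemma QQ_bound:
  assumes t: "t \<in> {0..T}"
  shows "norm (QQP t) \<le> cQQ"
proof -
  let ?k = "kapp TYPE('n) TYPE('m)"
  have e: "norm (Phi P t T) \<le> cE P" by (rule Phi_bound[OF P_cont t T_in])
  have eT: "norm (transpose (Phi P t T)) \<le> cE P" using e by (simp add: norm_transpose)
  have 1: "norm (transpose (Phi P t T) ** Gd t) \<le> ?k * cE P * cGd"
    by (rule mmk2[OF _ _ _ eT cGd(1)[OF t]]) simp_all
  have 2: "norm (transpose (Phi P t T) ** Gd t ** Phi P t T) \<le> ?k * (?k * cE P * cGd) * cE P"
    by (rule mmk2[OF _ _ _ 1 e]) simp_all
  have 3: "norm (LINT s:{t<..<T}|lborel. HH P t s) \<le> (LINT s:{t<..<T}|lborel. ?k\<^sup>2 * (cE P)\<^sup>2 * cF * w s)"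
    by (rule sint_norm_le[OF HH_int[OF t]]) (use t w_int_sub in \<open>auto intro!: HH_bound\<close>)
  also have "\<dots> = ?k\<^sup>2 * (cE P)\<^sup>2 * cF * (LINT s:{t<..<T}|lborel. w s)" by simp
  also have "\<dots> \<le> ?k\<^sup>2 * (cE P)\<^sup>2 * cF * Wint"
    using t cF_nonneg by (intro mult_left_mono w_int_le) auto
  finally have 4: "norm (LINT s:{t<..<T}|lborel. HH P t s) \<le> ?k\<^sup>2 * (cE P)\<^sup>2 * cF * Wint" .
  show ?thesis unfolding QQ_eq[OF t] cQQ_def
    using 2 4 norm_triangle_ineq[of "transpose (Phi P t T) ** Gd t ** Phi P t T" "LINT s:{t<..<T}|lborel. HH P t s"]
    by (simp add: power2_eq_square mult_ac)
qed

lemma HH_sbm_UU: "set_borel_measurable (lborel \<Otimes>\<^sub>M lborel) UU (\<lambda>x. HH P (fst x) (snd x))"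
proof -
  have gs: "set_borel_measurable (lborel \<Otimes>\<^sub>M lborel) UU (\<lambda>x. Gam M B S P (snd x))"
    by (rule sbm_subset[OF sbm_comp_snd[OF Gam_sbm[OF P_cont]] UU_sets UU_sub2])
  show ?thesis
    unfolding HH_def FF_def
    by (intro sbm_mm sbm_add sbm_diff sbm_transpose gs
      sbm_cont2[OF UU_borel Phi_cont2[OF P_cont] UU_sub]
      sbm_cont2[OF UU_borel cont_fs[OF Qt_cont] UU_sub]
      sbm_cont2[OF UU_borel cont_fs[OF St_cont] UU_sub]
      sbm_cont2[OF UU_borel cont_fs[OF Mt_cont] UU_sub])
qed

lemma Psi_sbm: "set_borel_measurable lborel {0<..<T} (\<lambda>t. LINT s:{t<..<T}|lborel. HH P t s)"
proof -
  let ?k = "\<lambda>x. indicator UU x *\<^sub>R HH P (fst x) (snd x)"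
  have km: "?k \<in> borel_measurable (lborel \<Otimes>\<^sub>M lborel)"
    using HH_sbm_UU unfolding set_borel_measurable_def .
  have "(\<lambda>t. \<integral>s. ?k (t, s) \<partial>lborel) \<in> borel_measurable lborel"
    by (rule lborel.borel_measurable_lebesgue_integral) (use km in \<open>simp add: case_prod_beta'\<close>)
  then have "set_borel_measurable lborel {0<..<T} (\<lambda>t. \<integral>s. ?k (t, s) \<partial>lborel)"
    unfolding set_borel_measurable_def by (intro borel_measurable_scaleR) auto
  then show ?thesis
  proof (rule sbm_cong)
    fix t :: real assume t: "t \<in> {0<..<T}"
    have "(\<lambda>s. ?k (t, s)) = (\<lambda>s. indicator {t<..<T} s *\<^sub>R HH P t s)"
      using t by (auto simp: UU_def indicator_def fun_eq_iff)
    then show "(\<integral>s. ?k (t, s) \<partial>lborel) = (LINT s:{t<..<T}|lborel. HH P t s)"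
      by (simp add: set_lebesgue_integral_def)
  qed
qed

lemma QQ_sbm: "set_borel_measurable lborel {0<..<T} QQP"
proof -
  have c: "continuous_on {0..T} (\<lambda>t. transpose (Phi P t T) ** Gd t ** Phi P t T)"
    by (intro bounded_bilinear.continuous_on[OF bb_mm] bounded_linear.continuous_on[OF bl_transpose]
        Phi_cont_fst[OF T_in] Gd_cont)
  have "set_borel_measurable lborel {0<..<T}
      (\<lambda>t. transpose (Phi P t T) ** Gd t ** Phi P t T + (LINT s:{t<..<T}|lborel. HH P t s))"
    by (intro sbm_add Psi_sbm sbm_cont[OF _ c J_sub]) simp
  then show ?thesis by (rule sbm_cong) (simp add: QQ_eq)
qed

end
end


context ric begin

lemma normB_sq_le_w: "(norm (B t))\<^sup>2 \<le> w t" unfolding w_def by simp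

context
  fixes P :: "real \<Rightarrow> real^'n^'n"
  assumes P_cont: "continuous_on {0..T} P"
begin

definition RR :: "real \<Rightarrow> real^'n^'n" where
  "RR t = Q t t - transpose (S t t) ** matrix_inv (M t t) ** S t t - QQP P t
           + P t ** B t ** matrix_inv (M t t) ** transpose (B t) ** P t"

definition "cR = cQ + (kapp TYPE('n) TYPE('m))\<^sup>2 * cS\<^sup>2 * cM + cQQ P
   + (kapp TYPE('n) TYPE('m))^4 * (cP P)\<^sup>2 * cM"

lemma cR_nonneg: "0 \<le> cR"
  unfolding cR_def using cQ(2) cS(2) cM(2) cQQ_nonneg[OF P_cont] by simp

lemma RR_bound:
  assumes t: "t \<in> {0..T}"
  shows "norm (RR t) \<le> cR * w t"
proof -
  let ?k = "kapp TYPE('n) TYPE('m)" and ?b = "norm (B t)"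
  have m: "norm (matrix_inv (M t t)) \<le> cM" using cM(1)[OF t] by (simp add: Minv_def)
  have sT: "norm (transpose (S t t)) \<le> cS" using cS(1)[OF t] by (simp add: norm_transpose)
  have n2a: "norm (transpose (S t t) ** matrix_inv (M t t)) \<le> ?k * cS * cM"
    by (rule mmk2[OF _ _ _ sT m]) simp_all
  have n2: "norm (transpose (S t t) ** matrix_inv (M t t) ** S t t) \<le> ?k * (?k * cS * cM) * cS"
    by (rule mmk2[OF _ _ _ n2a cS(1)[OF t]]) simp_all
  have a1: "norm (P t ** B t) \<le> ?k * cP P * ?b"
    by (rule mmk2[OF _ _ _ cP(1)[OF P_cont t]]) simp_all
  have a2: "norm (P t ** B t ** matrix_inv (M t t)) \<le> ?k * (?k * cP P * ?b) * cM"
    by (rule mmk2[OF _ _ _ a1 m]) simp_all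
  have a3: "norm (P t ** B t ** matrix_inv (M t t) ** transpose (B t)) \<le> ?k * (?k * (?k * cP P * ?b) * cM) * ?b"
    by (rule mmk2[OF _ _ _ a2]) (simp_all add: norm_transpose)
  have a4: "norm (P t ** B t ** matrix_inv (M t t) ** transpose (B t) ** P t)
      \<le> ?k * (?k * (?k * (?k * cP P * ?b) * cM) * ?b) * cP P"
    by (rule mmk2[OF _ _ _ a3 cP(1)[OF P_cont t]]) simp_all
  have a4': "?k * (?k * (?k * (?k * cP P * ?b) * cM) * ?b) * cP P = (?k^4 * (cP P)\<^sup>2 * cM) * ?b\<^sup>2"
    by (simp add: power2_eq_square power4_eq_xxxx mult_ac)
  have a5: "(?k^4 * (cP P)\<^sup>2 * cM) * ?b\<^sup>2 \<le> (?k^4 * (cP P)\<^sup>2 * cM) * w t"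
    using kap cM(2) normB_sq_le_w by (intro mult_left_mono) auto
  have q: "norm (QQP P t) \<le> cQQ P" by (rule QQ_bound[OF P_cont t])
  have tri: "norm (RR t) \<le> norm (Q t t) + norm (transpose (S t t) ** matrix_inv (M t t) ** S t t)
       + norm (QQP P t) + norm (P t ** B t ** matrix_inv (M t t) ** transpose (B t) ** P t)"
    unfolding RR_def by (smt (verit) norm_triangle_ineq norm_triangle_ineq4)
  have "norm (RR t) \<le> cQ + ?k\<^sup>2 * cS\<^sup>2 * cM + cQQ P + (?k^4 * (cP P)\<^sup>2 * cM) * w t"
  proof -
    have a6: "norm (P t ** B t ** matrix_inv (M t t) ** transpose (B t) ** P t) \<le> (?k^4 * (cP P)\<^sup>2 * cM) * w t"
      using a4 a4' a5 by linarith
    have n2': "?k * (?k * cS * cM) * cS = ?k\<^sup>2 * cS\<^sup>2 * cM" by (simp add: power2_eq_square mult_ac)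
    show ?thesis using tri cQ(1)[OF t] n2 n2' q a6 by linarith
  qed
  also have "\<dots> \<le> cR * w t"
  proof -
    have w1: "1 \<le> w t" by (rule w_ge1)
    have c0: "0 \<le> cQ + ?k\<^sup>2 * cS\<^sup>2 * cM + cQQ P"
      using cQ(2) cM(2) cQQ_nonneg[OF P_cont] by simp
    have "(cQ + ?k\<^sup>2 * cS\<^sup>2 * cM + cQQ P) * 1 \<le> (cQ + ?k\<^sup>2 * cS\<^sup>2 * cM + cQQ P) * w t"
      using c0 w1 by (rule mult_left_mono[rotated])
    then show ?thesis unfolding cR_def by (simp add: algebra_simps)
  qed
  finally show ?thesis .
qed

lemma RR_sbm: "set_borel_measurable lborel {0<..<T} RR"
proof -
  have mi: "continuous_on {0..T} (\<lambda>t. matrix_inv (M t t))"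
    using Minv_cont by (simp add: Minv_def[abs_def])
  show ?thesis
    unfolding RR_def[abs_def]
    by (intro sbm_mm sbm_add sbm_diff sbm_transpose B_meas QQ_sbm[OF P_cont]
      sbm_cont[OF _ mi J_sub] sbm_cont[OF _ P_cont J_sub]
      sbm_cont[OF _ diag_cont[OF Q_cont] J_sub] sbm_cont[OF _ diag_cont[OF S_cont] J_sub]) simp_all
qed

definition II :: "real \<Rightarrow> real \<Rightarrow> real^'n^'n" where
  "II t s = transpose (Phi P t s) ** RR s ** Phi P t s"

lemma II_bound:
  assumes t: "t \<in> {0..T}" and s: "s \<in> {0..T}"
  shows "norm (II t s) \<le> (kapp TYPE('n) TYPE('m))\<^sup>2 * (cE P)\<^sup>2 * cR * w s"
proof -
  let ?k = "kapp TYPE('n) TYPE('m)"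
  have e: "norm (Phi P t s) \<le> cE P" by (rule Phi_bound[OF P_cont t s])
  have eT: "norm (transpose (Phi P t s)) \<le> cE P" using e by (simp add: norm_transpose)
  have 1: "norm (transpose (Phi P t s) ** RR s) \<le> ?k * cE P * (cR * w s)"
    by (rule mmk2[OF _ _ _ eT RR_bound[OF s]]) simp_all
  have "norm (II t s) \<le> ?k * (?k * cE P * (cR * w s)) * cE P"
    unfolding II_def by (rule mmk2[OF _ _ _ 1 e]) simp_all
  then show ?thesis by (simp add: power2_eq_square mult_ac)
qed

lemma II_int:
  assumes t: "t \<in> {0..T}"
  shows "set_integrable lborel {t<..<T} (II t)"
proof (rule sint_bound[OF w_int_sub])
  have "set_borel_measurable lborel {0<..<T} (II t)"
    unfolding II_def[abs_def]
    by (intro sbm_mm sbm_transpose RR_sbm sbm_cont[OF _ Phi_cont_snd[OF P_cont t] J_sub]) simp_all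
  then show "set_borel_measurable lborel {t<..<T} (II t)"
    by (rule sbm_subset) (use t in auto)
  show "norm (II t x) \<le> (kapp TYPE('n) TYPE('m))\<^sup>2 * (cE P)\<^sup>2 * cR * w x" if "x \<in> {t<..<T}" for x
    using that t by (intro II_bound) auto
qed (use t in auto)

lemma ric_eq:
  assumes sol: "riccati_solution T A B Q S M G Gd Qt St Mt P" and t: "t \<in> {0..T}"
  shows "P t = transpose (Phi P t T) ** G T ** Phi P t T + (LINT s:{t<..<T}|lborel. II t s)"
proof -
  have e: "P t = transpose (EEmat A M B S P T t) ** G T ** EEmat A M B S P T t
        + (LBINT \<tau>=t..T. transpose (EEmat A M B S P \<tau> t) **
             (Q \<tau> \<tau> - transpose (S \<tau> \<tau>) ** matrix_inv (M \<tau> \<tau>) ** S \<tau> \<tau>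
              - QQP P \<tau>
              + P \<tau> ** B \<tau> ** matrix_inv (M \<tau> \<tau>) ** transpose (B \<tau>) ** P \<tau>)
             ** EEmat A M B S P \<tau> t)"
    using sol t unfolding riccati_solution_def by blast
  have "(LBINT \<tau>=t..T. transpose (EEmat A M B S P \<tau> t) **
             (Q \<tau> \<tau> - transpose (S \<tau> \<tau>) ** matrix_inv (M \<tau> \<tau>) ** S \<tau> \<tau>
              - QQP P \<tau>
              + P \<tau> ** B \<tau> ** matrix_inv (M \<tau> \<tau>) ** transpose (B \<tau>) ** P \<tau>)
             ** EEmat A M B S P \<tau> t) = (LINT s:{t<..<T}|lborel. II t s)"
    using t by (auto simp: LBINT_Ioo II_def RR_def EE_eq[OF P_cont] intro!: set_lebesgue_integral_cong)
  then show ?thesis using e t by (simp add: EE_eq[OF P_cont])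
qed

end
end


lemma sbm_times:
  fixes f g :: "'a \<Rightarrow> real"
  assumes "set_borel_measurable N X f" "set_borel_measurable N X g"
  shows "set_borel_measurable N X (\<lambda>x. f x * g x)"
proof -
  have "(\<lambda>x. indicator X x *\<^sub>R (f x * g x)) = (\<lambda>x. (indicator X x *\<^sub>R f x) * (indicator X x *\<^sub>R g x))"
    by (auto simp: indicator_def)
  then show ?thesis using assms unfolding set_borel_measurable_def by simp
qed

context ric begin

lemma b_1b: "norm (B t) * (1 + norm (B t)) \<le> 2 * w t"
proof -
  have "norm (B t) * (1 + norm (B t)) \<le> (1 + norm (B t))\<^sup>2"
    by (simp add: power2_eq_square mult_right_mono)
  then show ?thesis using one_normB_sq[of t] by linarith
qed

lemma w_sbm: "set_borel_measurable lborel {0<..<T} w"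
  by (rule sbm_integrable[OF w_int])

context
  fixes P1 P2 :: "real \<Rightarrow> real^'n^'n"
  assumes c1: "continuous_on {0..T} P1" and c2: "continuous_on {0..T} P2"
begin

definition dd :: "real \<Rightarrow> real" where "dd u = norm (P1 u - P2 u)"
definition Dl :: "real \<Rightarrow> real" where "Dl t = (LINT u:{t<..<T}|lborel. w u * dd u)"

lemma dd_nonneg: "0 \<le> dd u" by (simp add: dd_def)

lemma dd_cont: "continuous_on {0..T} dd"
  unfolding dd_def[abs_def] by (intro continuous_intros c1 c2)

lemma dd_bound: "u \<in> {0..T} \<Longrightarrow> dd u \<le> cP P1 + cP P2"
  unfolding dd_def using cP(1)[OF c1] cP(1)[OF c2] norm_triangle_ineq4[of "P1 u" "P2 u"]
  by fastforce

lemma wd_int: "set_integrable lborel {0<..<T} (\<lambda>u. w u * dd u)"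
proof (rule sint_bound[OF w_int, where c="cP P1 + cP P2"])
  show "set_borel_measurable lborel {0<..<T} (\<lambda>u. w u * dd u)"
    by (intro sbm_times w_sbm sbm_cont[OF _ dd_cont J_sub]) simp
  show "norm (w x * dd x) \<le> (cP P1 + cP P2) * w x" if "x \<in> {0<..<T}" for x
  proof -
    have "norm (w x * dd x) = w x * dd x" using w_nonneg[of x] dd_nonneg[of x] by simp
    also have "\<dots> \<le> w x * (cP P1 + cP P2)"
      using that dd_bound[of x] w_nonneg[of x] by (intro mult_left_mono) auto
    finally show ?thesis by (simp add: mult_ac)
  qed
qed

lemma wd_int_sub: "0 \<le> a \<Longrightarrow> b \<le> T \<Longrightarrow> set_integrable lborel {a<..<b} (\<lambda>u. w u * dd u)"
  by (rule set_integrable_subset[OF wd_int]) auto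

lemma Dl_mono: "0 \<le> t \<Longrightarrow> t \<le> s \<Longrightarrow> (LINT u:{s<..<T}|lborel. w u * dd u) \<le> Dl t"
  unfolding Dl_def
  by (rule set_integral_mono_set[OF wd_int_sub]) (auto intro: mult_nonneg_nonneg w_nonneg dd_nonneg)

lemma Dl_mono2: "0 \<le> t \<Longrightarrow> t \<le> s \<Longrightarrow> s \<le> T \<Longrightarrow> (LINT u:{t<..<s}|lborel. w u * dd u) \<le> Dl t"
  unfolding Dl_def
  by (rule set_integral_mono_set[OF wd_int_sub]) (auto intro: mult_nonneg_nonneg w_nonneg dd_nonneg)

lemma Dl_nonneg: "0 \<le> t \<Longrightarrow> t \<le> T \<Longrightarrow> 0 \<le> Dl t"
  unfolding Dl_def set_lebesgue_integral_def
  by (rule integral_nonneg_AE) (auto intro!: AE_I2 simp: indicator_def w_nonneg dd_nonneg)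

lemma Gam_diff:
  assumes u: "u \<in> {0..T}"
  shows "norm (Gam M B S P1 u - Gam M B S P2 u) \<le> (kapp TYPE('n) TYPE('m))\<^sup>2 * cM * norm (B u) * dd u"
proof -
  let ?k = "kapp TYPE('n) TYPE('m)"
  have eq: "Gam M B S P1 u - Gam M B S P2 u = Minv u ** (transpose (B u) ** (P1 u - P2 u))"
    unfolding Gam_eq by (simp add: mm_diff_right[symmetric] algebra_simps)
  have 1: "norm (transpose (B u) ** (P1 u - P2 u)) \<le> ?k * norm (B u) * dd u"
    by (rule mmk2) (simp_all add: norm_transpose dd_def)
  have "norm (Minv u ** (transpose (B u) ** (P1 u - P2 u))) \<le> ?k * cM * (?k * norm (B u) * dd u)"
    by (rule mmk2[OF _ _ _ cM(1)[OF u] 1]) simp_all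
  then show ?thesis unfolding eq by (simp add: power2_eq_square mult_ac)
qed

lemma gg_diff:
  assumes u: "u \<in> {0..T}"
  shows "norm (gg P1 u - gg P2 u) \<le> (kapp TYPE('n) TYPE('m))^3 * cM * (w u * dd u)"
proof -
  let ?k = "kapp TYPE('n) TYPE('m)"
  have eq: "gg P1 u - gg P2 u = B u ** (Gam M B S P2 u - Gam M B S P1 u)"
    unfolding gg_def by (simp add: mm_diff_right)
  have g: "norm (Gam M B S P2 u - Gam M B S P1 u) \<le> ?k\<^sup>2 * cM * norm (B u) * dd u"
    using Gam_diff[OF u] by (simp add: norm_minus_commute)
  have "norm (B u ** (Gam M B S P2 u - Gam M B S P1 u)) \<le> ?k * norm (B u) * (?k\<^sup>2 * cM * norm (B u) * dd u)"
    by (rule mmk2[OF _ _ _ _ g]) simp_all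
  also have "\<dots> = (?k^3 * cM * dd u) * (norm (B u))\<^sup>2"
    by (simp add: power2_eq_square power3_eq_cube mult_ac)
  also have "\<dots> \<le> (?k^3 * cM * dd u) * w u"
    using kap cM(2) dd_nonneg normB_sq_le_w by (intro mult_left_mono) auto
  finally show ?thesis unfolding eq by (simp add: mult_ac)
qed

definition "cc = 2 * (cIG P1 + cIG P2)"
definition "cPhi = K0 TYPE('n) * N1 TYPE('n) * exp (2 * (K0 TYPE('n) * cc + 1)) * (kapp TYPE('n) TYPE('m))^3 * cM"

lemma cPhi_nonneg: "0 \<le> cPhi"
  unfolding cPhi_def using K0_pos[where 'n='n] N1_nonneg[where 'n='n] kap cM(2) by simp

lemma IG_diff_eq:
  assumes "0 \<le> t" "t \<le> s" "s \<le> T"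
  shows "(IG P1 s - IG P1 t) - (IG P2 s - IG P2 t) = (LINT u:{t<..<s}|lborel. gg P1 u - gg P2 u)"
proof -
  have i1: "set_integrable lborel {t<..<s} (gg P1)"
    by (rule set_integrable_subset[OF gg_int[OF c1]]) (use assms in auto)
  have i2: "set_integrable lborel {t<..<s} (gg P2)"
    by (rule set_integrable_subset[OF gg_int[OF c2]]) (use assms in auto)
  have e1: "IG P1 s - IG P1 t = (LINT u:{t<..<s}|lborel. gg P1 u)"
    unfolding IG_def using indef_diff[OF gg_int[OF c1], of t s] assms
    by (simp add: zero_ereal_def LBINT_Ioo)
  have e2: "IG P2 s - IG P2 t = (LINT u:{t<..<s}|lborel. gg P2 u)"
    unfolding IG_def using indef_diff[OF gg_int[OF c2], of t s] assms
    by (simp add: zero_ereal_def LBINT_Ioo)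
  show ?thesis unfolding e1 e2 by (rule set_integral_diff(2)[OF i1 i2, symmetric])
qed

lemma Phi_diff:
  assumes "0 \<le> t" "t \<le> s" "s \<le> T"
  shows "norm (Phi P1 t s - Phi P2 t s) \<le> cPhi * Dl t"
proof -
  let ?k = "kapp TYPE('n) TYPE('m)"
  have tI: "t \<in> {0..T}" and sI: "s \<in> {0..T}" using assms by auto
  have n1: "norm (IG P1 s - IG P1 t) \<le> cc"
    using cIG(1)[OF c1 tI] cIG(1)[OF c1 sI] cIG(2)[OF c2] norm_triangle_ineq4[of "IG P1 s" "IG P1 t"]
    unfolding cc_def by (smt (verit))
  have n2: "norm (IG P2 s - IG P2 t) \<le> cc"
    using cIG(1)[OF c2 tI] cIG(1)[OF c2 sI] cIG(2)[OF c1] norm_triangle_ineq4[of "IG P2 s" "IG P2 t"]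
    unfolding cc_def by (smt (verit))
  let ?L = "K0 TYPE('n) * N1 TYPE('n) * exp (2 * (K0 TYPE('n) * cc + 1))"
  have L: "0 \<le> ?L" using K0_pos[where 'n='n] N1_nonneg[where 'n='n] by simp
  have "norm (Phi P1 t s - Phi P2 t s) \<le> ?L * norm ((IG P1 s - IG P1 t) - (IG P2 s - IG P2 t))"
    unfolding Phi_def by (rule mexp_lipschitz[OF n1 n2])
  also have "norm ((IG P1 s - IG P1 t) - (IG P2 s - IG P2 t))
      \<le> (LINT u:{t<..<s}|lborel. ?k^3 * cM * (w u * dd u))"
    unfolding IG_diff_eq[OF assms]
  proof (rule sint_norm_le)
    show "set_integrable lborel {t<..<s} (\<lambda>u. gg P1 u - gg P2 u)"
      by (intro set_integral_diff(1) set_integrable_subset[OF gg_int[OF c1]]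
          set_integrable_subset[OF gg_int[OF c2]]) (use assms in auto)
    show "set_integrable lborel {t<..<s} (\<lambda>u. ?k^3 * cM * (w u * dd u))"
      using wd_int_sub[of t s] assms by simp
    show "norm (gg P1 u - gg P2 u) \<le> ?k^3 * cM * (w u * dd u)" if "u \<in> {t<..<s}" for u
      using that assms by (intro gg_diff) auto
  qed
  also have "(LINT u:{t<..<s}|lborel. ?k^3 * cM * (w u * dd u)) = ?k^3 * cM * (LINT u:{t<..<s}|lborel. w u * dd u)"
    by simp
  also have "\<dots> \<le> ?k^3 * cM * Dl t"
    using kap cM(2) Dl_mono2[OF assms] by (intro mult_left_mono) auto
  finally show ?thesis using L unfolding cPhi_def
    by (smt (verit, ccfv_SIG) mult.assoc mult_left_mono)
qed

end
end


context ric begin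

lemma triple_diff:
  fixes X1 X2 Y1 Y2 :: "real^'n^'n"
  assumes "norm (X1 - X2) \<le> ex" "norm X1 \<le> cx1" "norm X2 \<le> cx2"
    "norm Y1 \<le> ny1" "norm Y2 \<le> ny2" "norm (Y1 - Y2) \<le> dy"
  shows "norm (transpose X1 ** Y1 ** X1 - transpose X2 ** Y2 ** X2)
    \<le> (kapp TYPE('n) TYPE('m))\<^sup>2 * (ex * ny1 * cx1 + cx2 * dy * cx1 + cx2 * ny2 * ex)"
proof -
  let ?k = "kapp TYPE('n) TYPE('m)"
  have eq: "transpose X1 ** Y1 ** X1 - transpose X2 ** Y2 ** X2
     = transpose (X1 - X2) ** Y1 ** X1 + transpose X2 ** (Y1 - Y2) ** X1 + transpose X2 ** Y2 ** (X1 - X2)"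
    by (simp add: transpose_diff mm_diff_left mm_diff_right)
  have a1: "norm (transpose (X1 - X2) ** Y1) \<le> ?k * ex * ny1"
    by (rule mmk2) (simp_all add: norm_transpose assms)
  have u1: "norm (transpose (X1 - X2) ** Y1 ** X1) \<le> ?k * (?k * ex * ny1) * cx1"
    by (rule mmk2[OF _ _ _ a1 assms(2)]) simp_all
  have a2: "norm (transpose X2 ** (Y1 - Y2)) \<le> ?k * cx2 * dy"
    by (rule mmk2) (simp_all add: norm_transpose assms)
  have u2: "norm (transpose X2 ** (Y1 - Y2) ** X1) \<le> ?k * (?k * cx2 * dy) * cx1"
    by (rule mmk2[OF _ _ _ a2 assms(2)]) simp_all
  have a3: "norm (transpose X2 ** Y2) \<le> ?k * cx2 * ny2"
    by (rule mmk2) (simp_all add: norm_transpose assms)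
  have u3: "norm (transpose X2 ** Y2 ** (X1 - X2)) \<le> ?k * (?k * cx2 * ny2) * ex"
    by (rule mmk2[OF _ _ _ a3 assms(1)]) simp_all
  have "norm (transpose X1 ** Y1 ** X1 - transpose X2 ** Y2 ** X2)
      \<le> ?k * (?k * ex * ny1) * cx1 + ?k * (?k * cx2 * dy) * cx1 + ?k * (?k * cx2 * ny2) * ex"
    unfolding eq using u1 u2 u3 by (smt (verit) norm_triangle_ineq)
  also have "\<dots> = ?k\<^sup>2 * (ex * ny1 * cx1 + cx2 * dy * cx1 + cx2 * ny2 * ex)"
    by (simp add: power2_eq_square algebra_simps)
  finally show ?thesis .
qed


context
  fixes P1 P2 :: "real \<Rightarrow> real^'n^'n"
  assumes c1: "continuous_on {0..T} P1" and c2: "continuous_on {0..T} P2"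
begin


definition "cFd = 2 * (kapp TYPE('n) TYPE('m))^3 * cM * cSt + 2 * (kapp TYPE('n) TYPE('m))^4 * cM * cMt * (cG P1 + cG P2)"

lemma FF_diff:
  assumes t: "t \<in> {0..T}" and s: "s \<in> {0..T}"
  shows "norm (FF P1 t s - FF P2 t s) \<le> cFd * (w s * dd P1 P2 s)"
proof -
  let ?G1 = "Gam M B S P1 s" and ?G2 = "Gam M B S P2 s" and ?b = "norm (B s)" and ?d = "dd P1 P2 s"
  let ?de = "(kapp TYPE('n) TYPE('m))\<^sup>2 * cM * ?b * ?d"
  have eq: "FF P1 t s - FF P2 t s = - (transpose (?G1 - ?G2) ** St t s) - (transpose (St t s) ** (?G1 - ?G2))
     + (transpose (?G1 - ?G2) ** Mt t s ** ?G1) + (transpose ?G2 ** Mt t s ** (?G1 - ?G2))"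
    unfolding FF_def by (simp add: transpose_diff mm_diff_left mm_diff_right)
  have dg: "norm (?G1 - ?G2) \<le> ?de" by (rule Gam_diff[OF c1 c2 s])
  have dgT: "norm (transpose (?G1 - ?G2)) \<le> ?de" using dg by (simp add: norm_transpose)
  have g1: "norm ?G1 \<le> cG P1 * (1 + ?b)" by (rule Gam_bound[OF c1 s])
  have g2T: "norm (transpose ?G2) \<le> cG P2 * (1 + ?b)" using Gam_bound[OF c2 s] by (simp add: norm_transpose)
  have u1: "norm (transpose (?G1 - ?G2) ** St t s) \<le> kapp TYPE('n) TYPE('m) * ?de * cSt"
    by (rule mmk2[OF _ _ _ dgT cSt(1)[OF t s]]) simp_all
  have u2: "norm (transpose (St t s) ** (?G1 - ?G2)) \<le> kapp TYPE('n) TYPE('m) * cSt * ?de"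
    by (rule mmk2[OF _ _ _ _ dg]) (simp_all add: norm_transpose cSt(1)[OF t s])
  have u3a: "norm (transpose (?G1 - ?G2) ** Mt t s) \<le> kapp TYPE('n) TYPE('m) * ?de * cMt"
    by (rule mmk2[OF _ _ _ dgT cMt(1)[OF t s]]) simp_all
  have u3: "norm (transpose (?G1 - ?G2) ** Mt t s ** ?G1) \<le> kapp TYPE('n) TYPE('m) * (kapp TYPE('n) TYPE('m) * ?de * cMt) * (cG P1 * (1 + ?b))"
    by (rule mmk2[OF _ _ _ u3a g1]) simp_all
  have u4a: "norm (transpose ?G2 ** Mt t s) \<le> kapp TYPE('n) TYPE('m) * (cG P2 * (1 + ?b)) * cMt"
    by (rule mmk2[OF _ _ _ g2T cMt(1)[OF t s]]) simp_all
  have u4: "norm (transpose ?G2 ** Mt t s ** (?G1 - ?G2)) \<le> kapp TYPE('n) TYPE('m) * (kapp TYPE('n) TYPE('m) * (cG P2 * (1 + ?b)) * cMt) * ?de"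
    by (rule mmk2[OF _ _ _ u4a dg]) simp_all
  have tri: "norm (FF P1 t s - FF P2 t s) \<le> kapp TYPE('n) TYPE('m) * ?de * cSt + kapp TYPE('n) TYPE('m) * cSt * ?de
      + kapp TYPE('n) TYPE('m) * (kapp TYPE('n) TYPE('m) * ?de * cMt) * (cG P1 * (1 + ?b)) + kapp TYPE('n) TYPE('m) * (kapp TYPE('n) TYPE('m) * (cG P2 * (1 + ?b)) * cMt) * ?de"
    unfolding eq using u1 u2 u3 u4 by (smt (verit) norm_triangle_ineq norm_triangle_ineq4 norm_minus_cancel)
  have r1: "kapp TYPE('n) TYPE('m) * ?de * cSt + kapp TYPE('n) TYPE('m) * cSt * ?de = (2 * (kapp TYPE('n) TYPE('m))^3 * cM * cSt * ?d) * ?b"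
    by (simp add: power2_eq_square power3_eq_cube algebra_simps)
  have r2: "kapp TYPE('n) TYPE('m) * (kapp TYPE('n) TYPE('m) * ?de * cMt) * (cG P1 * (1 + ?b)) + kapp TYPE('n) TYPE('m) * (kapp TYPE('n) TYPE('m) * (cG P2 * (1 + ?b)) * cMt) * ?de
     = ((kapp TYPE('n) TYPE('m))^4 * cM * cMt * (cG P1 + cG P2) * ?d) * (?b * (1 + ?b))"
    by (simp add: power2_eq_square power4_eq_xxxx algebra_simps)
  have p1: "0 \<le> 2 * (kapp TYPE('n) TYPE('m))^3 * cM * cSt * ?d" using kap cM(2) cSt(2) dd_nonneg[OF c1 c2] by simp
  have p2: "0 \<le> (kapp TYPE('n) TYPE('m))^4 * cM * cMt * (cG P1 + cG P2) * ?d"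
    using kap cM(2) cMt(2) dd_nonneg[OF c1 c2] cG_nonneg[OF c1] cG_nonneg[OF c2] by simp
  have s1: "(2 * (kapp TYPE('n) TYPE('m))^3 * cM * cSt * ?d) * ?b \<le> (2 * (kapp TYPE('n) TYPE('m))^3 * cM * cSt * ?d) * w s"
    using p1 normB_le_w by (rule mult_left_mono[rotated])
  have s2: "((kapp TYPE('n) TYPE('m))^4 * cM * cMt * (cG P1 + cG P2) * ?d) * (?b * (1 + ?b)) \<le> ((kapp TYPE('n) TYPE('m))^4 * cM * cMt * (cG P1 + cG P2) * ?d) * (2 * w s)"
    using p2 b_1b by (rule mult_left_mono[rotated])
  have fin: "(2 * (kapp TYPE('n) TYPE('m))^3 * cM * cSt * ?d) * w s + ((kapp TYPE('n) TYPE('m))^4 * cM * cMt * (cG P1 + cG P2) * ?d) * (2 * w s)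
      = cFd * (w s * ?d)"
    unfolding cFd_def by (simp add: algebra_simps)
  show ?thesis using tri r1 r2 s1 s2 fin by linarith
qed


definition "cH1 = (kapp TYPE('n) TYPE('m))\<^sup>2 * cPhi P1 P2 * (cF P1 * cE P1 + cE P2 * cF P2)"
definition "cH2 = (kapp TYPE('n) TYPE('m))\<^sup>2 * cE P2 * cFd * cE P1"

lemma cH_nonneg: "0 \<le> cH1" "0 \<le> cH2"
  unfolding cH1_def cH2_def cFd_def
  using cPhi_nonneg[OF c1 c2] cF_nonneg[OF c1] cF_nonneg[OF c2] cE_nonneg[OF c1] cE_nonneg[OF c2]
    cM(2) cSt(2) cMt(2) cG_nonneg[OF c1] cG_nonneg[OF c2] kap by simp_all

lemma HH_diff:
  assumes t: "t \<in> {0..T}" and s: "s \<in> {0..T}" and ts: "t \<le> s"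
  shows "norm (HH P1 t s - HH P2 t s) \<le> cH1 * w s * Dl P1 P2 t + cH2 * (w s * dd P1 P2 s)"
proof -
  have "norm (HH P1 t s - HH P2 t s) \<le> (kapp TYPE('n) TYPE('m))\<^sup>2 * ((cPhi P1 P2 * Dl P1 P2 t) * (cF P1 * w s) * cE P1
      + cE P2 * (cFd * (w s * dd P1 P2 s)) * cE P1 + cE P2 * (cF P2 * w s) * (cPhi P1 P2 * Dl P1 P2 t))"
    unfolding HH_def
    by (rule triple_diff[OF Phi_diff[OF c1 c2] Phi_bound[OF c1 t s] Phi_bound[OF c2 t s]
          FF_bound[OF c1 t s] FF_bound[OF c2 t s] FF_diff[OF t s]]) (use t s ts in auto)
  also have "\<dots> = cH1 * w s * Dl P1 P2 t + cH2 * (w s * dd P1 P2 s)"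
    unfolding cH1_def cH2_def by (simp add: algebra_simps)
  finally show ?thesis .
qed

definition "cQd = (kapp TYPE('n) TYPE('m))\<^sup>2 * cGd * cPhi P1 P2 * (cE P1 + cE P2) + cH1 * Wint + cH2"

lemma cQd_nonneg: "0 \<le> cQd"
  unfolding cQd_def using cH_nonneg cGd(2) cPhi_nonneg[OF c1 c2] cE_nonneg[OF c1] cE_nonneg[OF c2] Wint_nonneg
  by simp

lemma QQ_diff:
  assumes t: "t \<in> {0..T}"
  shows "norm (QQP P1 t - QQP P2 t) \<le> cQd * Dl P1 P2 t"
proof -
  let ?D = "Dl P1 P2 t"
  have D0: "0 \<le> ?D" using Dl_nonneg[OF c1 c2] t by auto
  have 1: "norm (transpose (Phi P1 t T) ** Gd t ** Phi P1 t T - transpose (Phi P2 t T) ** Gd t ** Phi P2 t T)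
     \<le> (kapp TYPE('n) TYPE('m))\<^sup>2 * ((cPhi P1 P2 * ?D) * cGd * cE P1 + cE P2 * 0 * cE P1 + cE P2 * cGd * (cPhi P1 P2 * ?D))"
    by (rule triple_diff[OF Phi_diff[OF c1 c2] Phi_bound[OF c1 t T_in] Phi_bound[OF c2 t T_in]
          cGd(1)[OF t] cGd(1)[OF t]]) (use t in auto)
  have i1: "set_integrable lborel {t<..<T} (HH P1 t)" by (rule HH_int[OF c1 t])
  have i2: "set_integrable lborel {t<..<T} (HH P2 t)" by (rule HH_int[OF c2 t])
  have iw: "set_integrable lborel {t<..<T} w" using t by (intro w_int_sub) auto
  have iwd: "set_integrable lborel {t<..<T} (\<lambda>u. w u * dd P1 P2 u)" using t by (intro wd_int_sub[OF c1 c2]) auto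
  have "norm ((LINT s:{t<..<T}|lborel. HH P1 t s) - (LINT s:{t<..<T}|lborel. HH P2 t s))
      = norm (LINT s:{t<..<T}|lborel. HH P1 t s - HH P2 t s)"
    by (simp add: set_integral_diff(2)[OF i1 i2])
  also have "\<dots> \<le> (LINT s:{t<..<T}|lborel. cH1 * ?D * w s + cH2 * (w s * dd P1 P2 s))"
  proof (rule sint_norm_le)
    show "set_integrable lborel {t<..<T} (\<lambda>s. HH P1 t s - HH P2 t s)" using i1 i2 by (rule set_integral_diff(1))
    show "set_integrable lborel {t<..<T} (\<lambda>s. cH1 * ?D * w s + cH2 * (w s * dd P1 P2 s))"
      using iw iwd by (intro set_integral_add(1)) auto
    show "norm (HH P1 t s - HH P2 t s) \<le> cH1 * ?D * w s + cH2 * (w s * dd P1 P2 s)" if "s \<in> {t<..<T}" for s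
      using HH_diff[of t s] that t by (simp add: mult_ac)
  qed
  also have "\<dots> = cH1 * ?D * (LINT s:{t<..<T}|lborel. w s) + cH2 * ?D"
    using iw iwd by (simp add: set_integral_add(2) Dl_def[OF c1 c2])
  also have "\<dots> \<le> cH1 * ?D * Wint + cH2 * ?D"
    using cH_nonneg D0 t by (intro add_mono mult_left_mono w_int_le) auto
  finally have 2: "norm ((LINT s:{t<..<T}|lborel. HH P1 t s) - (LINT s:{t<..<T}|lborel. HH P2 t s))
      \<le> cH1 * ?D * Wint + cH2 * ?D" .
  have "norm (QQP P1 t - QQP P2 t) \<le>
     norm (transpose (Phi P1 t T) ** Gd t ** Phi P1 t T - transpose (Phi P2 t T) ** Gd t ** Phi P2 t T)
     + norm ((LINT s:{t<..<T}|lborel. HH P1 t s) - (LINT s:{t<..<T}|lborel. HH P2 t s))"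
    unfolding QQ_eq[OF c1 t] QQ_eq[OF c2 t] by (smt (verit) norm_triangle_ineq add_diff_add)
  also have "\<dots> \<le> (kapp TYPE('n) TYPE('m))\<^sup>2 * ((cPhi P1 P2 * ?D) * cGd * cE P1 + cE P2 * 0 * cE P1 + cE P2 * cGd * (cPhi P1 P2 * ?D))
     + (cH1 * ?D * Wint + cH2 * ?D)" using 1 2 by (rule add_mono)
  also have "\<dots> = cQd * ?D" unfolding cQd_def by (simp add: algebra_simps)
  finally show ?thesis .
qed

definition "cRd = (kapp TYPE('n) TYPE('m))^4 * cM * (cP P1 + cP P2)"

lemma RR_diff:
  assumes t: "t \<in> {0..T}"
  shows "norm (RR P1 t - RR P2 t) \<le> cQd * Dl P1 P2 t + cRd * (w t * dd P1 P2 t)"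
proof -
  let ?Z = "B t ** matrix_inv (M t t) ** transpose (B t)" and ?b = "norm (B t)" and ?d = "dd P1 P2 t"
  have re: "P ** B t ** matrix_inv (M t t) ** transpose (B t) ** P = P ** ?Z ** P" for P :: "real^'n^'n"
    by (simp add: matrix_mul_assoc)
  have eq: "RR P1 t - RR P2 t = (QQP P2 t - QQP P1 t) + ((P1 t - P2 t) ** ?Z ** P1 t + P2 t ** ?Z ** (P1 t - P2 t))"
    unfolding RR_def[OF c1] RR_def[OF c2] re by (simp add: mm_diff_left mm_diff_right)
  have m: "norm (matrix_inv (M t t)) \<le> cM" using cM(1)[OF t] by (simp add: Minv_def)
  have z1: "norm (B t ** matrix_inv (M t t)) \<le> (kapp TYPE('n) TYPE('m)) * ?b * cM" by (rule mmk2[OF _ _ _ _ m]) simp_all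
  have z: "norm ?Z \<le> (kapp TYPE('n) TYPE('m)) * ((kapp TYPE('n) TYPE('m)) * ?b * cM) * ?b" by (rule mmk2[OF _ _ _ z1]) (simp_all add: norm_transpose)
  let ?z = "(kapp TYPE('n) TYPE('m)) * ((kapp TYPE('n) TYPE('m)) * ?b * cM) * ?b"
  have dP: "norm (P1 t - P2 t) \<le> ?d" by (simp add: dd_def[OF c1 c2])
  have v1a: "norm ((P1 t - P2 t) ** ?Z) \<le> (kapp TYPE('n) TYPE('m)) * ?d * ?z" by (rule mmk2[OF _ _ _ dP z]) simp_all
  have v1: "norm ((P1 t - P2 t) ** ?Z ** P1 t) \<le> (kapp TYPE('n) TYPE('m)) * ((kapp TYPE('n) TYPE('m)) * ?d * ?z) * cP P1"
    by (rule mmk2[OF _ _ _ v1a cP(1)[OF c1 t]]) simp_all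
  have v2a: "norm (P2 t ** ?Z) \<le> (kapp TYPE('n) TYPE('m)) * cP P2 * ?z" by (rule mmk2[OF _ _ _ cP(1)[OF c2 t] z]) simp_all
  have v2: "norm (P2 t ** ?Z ** (P1 t - P2 t)) \<le> (kapp TYPE('n) TYPE('m)) * ((kapp TYPE('n) TYPE('m)) * cP P2 * ?z) * ?d"
    by (rule mmk2[OF _ _ _ v2a dP]) simp_all
  have q: "norm (QQP P2 t - QQP P1 t) \<le> cQd * Dl P1 P2 t"
    using QQ_diff[OF t] by (simp add: norm_minus_commute)
  have e1: "(kapp TYPE('n) TYPE('m)) * ((kapp TYPE('n) TYPE('m)) * ?d * ?z) * cP P1 + (kapp TYPE('n) TYPE('m)) * ((kapp TYPE('n) TYPE('m)) * cP P2 * ?z) * ?d = ((kapp TYPE('n) TYPE('m))^4 * cM * (cP P1 + cP P2) * ?d) * ?b\<^sup>2"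
    by (simp add: power2_eq_square power4_eq_xxxx algebra_simps)
  have e2: "((kapp TYPE('n) TYPE('m))^4 * cM * (cP P1 + cP P2) * ?d) * ?b\<^sup>2 \<le> ((kapp TYPE('n) TYPE('m))^4 * cM * (cP P1 + cP P2) * ?d) * w t"
    using kap cM(2) cP(2)[OF c1] cP(2)[OF c2] dd_nonneg[OF c1 c2] normB_sq_le_w
    by (intro mult_left_mono) auto
  have e3: "((kapp TYPE('n) TYPE('m))^4 * cM * (cP P1 + cP P2) * ?d) * w t = cRd * (w t * ?d)" unfolding cRd_def by (simp add: mult_ac)
  show ?thesis unfolding eq using q v1 v2 e1 e2 e3 by (smt (verit) norm_triangle_ineq)
qed

definition "cI1 = (kapp TYPE('n) TYPE('m))\<^sup>2 * (cPhi P1 P2 * cR P1 * cE P1 + cE P2 * cQd * cE P1 + cE P2 * cR P2 * cPhi P1 P2)"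
definition "cI2 = (kapp TYPE('n) TYPE('m))\<^sup>2 * cE P2 * cRd * cE P1"

lemma cI_nonneg: "0 \<le> cI1" "0 \<le> cI2"
  unfolding cI1_def cI2_def cRd_def
  using cPhi_nonneg[OF c1 c2] cR_nonneg[OF c1] cR_nonneg[OF c2] cE_nonneg[OF c1] cE_nonneg[OF c2]
    cQd_nonneg cM(2) cP(2)[OF c1] cP(2)[OF c2] kap by simp_all

lemma II_diff:
  assumes t: "t \<in> {0..T}" and s: "s \<in> {0..T}" and ts: "t \<le> s"
  shows "norm (II P1 t s - II P2 t s) \<le> cI1 * w s * Dl P1 P2 t + cI2 * (w s * dd P1 P2 s)"
proof -
  have Dm: "Dl P1 P2 s \<le> Dl P1 P2 t" using Dl_mono[OF c1 c2, of t s] t ts by (simp add: Dl_def[OF c1 c2])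
  have D0: "0 \<le> Dl P1 P2 s" using Dl_nonneg[OF c1 c2] s by auto
  have w1: "1 \<le> w s" by (rule w_ge1)
  have dy: "norm (RR P1 s - RR P2 s) \<le> cQd * w s * Dl P1 P2 t + cRd * (w s * dd P1 P2 s)"
  proof -
    have "cQd * Dl P1 P2 s \<le> cQd * (w s * Dl P1 P2 t)"
    proof (rule mult_left_mono[OF _ cQd_nonneg])
      have "Dl P1 P2 s * 1 \<le> Dl P1 P2 t * w s"
        using Dm D0 w1 by (intro mult_mono) auto
      then show "Dl P1 P2 s \<le> w s * Dl P1 P2 t" by (simp add: mult_ac)
    qed
    then show ?thesis using RR_diff[OF s] by (simp add: mult_ac)
  qed
  have "norm (II P1 t s - II P2 t s) \<le> (kapp TYPE('n) TYPE('m))\<^sup>2 * ((cPhi P1 P2 * Dl P1 P2 t) * (cR P1 * w s) * cE P1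
      + cE P2 * (cQd * w s * Dl P1 P2 t + cRd * (w s * dd P1 P2 s)) * cE P1 + cE P2 * (cR P2 * w s) * (cPhi P1 P2 * Dl P1 P2 t))"
    unfolding II_def[OF c1] II_def[OF c2]
    by (rule triple_diff[OF Phi_diff[OF c1 c2] Phi_bound[OF c1 t s] Phi_bound[OF c2 t s]
          RR_bound[OF c1 s] RR_bound[OF c2 s] dy]) (use t s ts in auto)
  also have "\<dots> = cI1 * w s * Dl P1 P2 t + cI2 * (w s * dd P1 P2 s)"
    unfolding cI1_def cI2_def by (simp add: algebra_simps)
  finally show ?thesis .
qed

definition "Cm = (kapp TYPE('n) TYPE('m))\<^sup>2 * norm (G T) * cPhi P1 P2 * (cE P1 + cE P2) + cI1 * Wint + cI2"

lemma Cm_nonneg: "0 \<le> Cm"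
  unfolding Cm_def using cI_nonneg cPhi_nonneg[OF c1 c2] cE_nonneg[OF c1] cE_nonneg[OF c2] Wint_nonneg
  by simp

lemma main_est:
  assumes sol1: "riccati_solution T A B Q S M G Gd Qt St Mt P1"
    and sol2: "riccati_solution T A B Q S M G Gd Qt St Mt P2"
    and t: "t \<in> {0..T}"
  shows "dd P1 P2 t \<le> Cm * Dl P1 P2 t"
proof -
  let ?D = "Dl P1 P2 t"
  have D0: "0 \<le> ?D" using Dl_nonneg[OF c1 c2] t by auto
  have 1: "norm (transpose (Phi P1 t T) ** G T ** Phi P1 t T - transpose (Phi P2 t T) ** G T ** Phi P2 t T)
     \<le> (kapp TYPE('n) TYPE('m))\<^sup>2 * ((cPhi P1 P2 * ?D) * norm (G T) * cE P1 + cE P2 * 0 * cE P1 + cE P2 * norm (G T) * (cPhi P1 P2 * ?D))"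
    by (rule triple_diff[OF Phi_diff[OF c1 c2] Phi_bound[OF c1 t T_in] Phi_bound[OF c2 t T_in]]) (use t in auto)
  have i1: "set_integrable lborel {t<..<T} (II P1 t)" by (rule II_int[OF c1 t])
  have i2: "set_integrable lborel {t<..<T} (II P2 t)" by (rule II_int[OF c2 t])
  have iw: "set_integrable lborel {t<..<T} w" using t by (intro w_int_sub) auto
  have iwd: "set_integrable lborel {t<..<T} (\<lambda>u. w u * dd P1 P2 u)" using t by (intro wd_int_sub[OF c1 c2]) auto
  have "norm ((LINT s:{t<..<T}|lborel. II P1 t s) - (LINT s:{t<..<T}|lborel. II P2 t s))
      = norm (LINT s:{t<..<T}|lborel. II P1 t s - II P2 t s)"
    by (simp add: set_integral_diff(2)[OF i1 i2])
  also have "\<dots> \<le> (LINT s:{t<..<T}|lborel. cI1 * ?D * w s + cI2 * (w s * dd P1 P2 s))"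
  proof (rule sint_norm_le)
    show "set_integrable lborel {t<..<T} (\<lambda>s. II P1 t s - II P2 t s)" using i1 i2 by (rule set_integral_diff(1))
    show "set_integrable lborel {t<..<T} (\<lambda>s. cI1 * ?D * w s + cI2 * (w s * dd P1 P2 s))"
      using iw iwd by (intro set_integral_add(1)) auto
    show "norm (II P1 t s - II P2 t s) \<le> cI1 * ?D * w s + cI2 * (w s * dd P1 P2 s)" if "s \<in> {t<..<T}" for s
      using II_diff[of t s] that t by (simp add: mult_ac)
  qed
  also have "\<dots> = cI1 * ?D * (LINT s:{t<..<T}|lborel. w s) + cI2 * ?D"
    using iw iwd by (simp add: set_integral_add(2) Dl_def[OF c1 c2])
  also have "\<dots> \<le> cI1 * ?D * Wint + cI2 * ?D"
    using cI_nonneg D0 t by (intro add_mono mult_left_mono w_int_le) auto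
  finally have 2: "norm ((LINT s:{t<..<T}|lborel. II P1 t s) - (LINT s:{t<..<T}|lborel. II P2 t s))
      \<le> cI1 * ?D * Wint + cI2 * ?D" .
  have "dd P1 P2 t \<le>
     norm (transpose (Phi P1 t T) ** G T ** Phi P1 t T - transpose (Phi P2 t T) ** G T ** Phi P2 t T)
     + norm ((LINT s:{t<..<T}|lborel. II P1 t s) - (LINT s:{t<..<T}|lborel. II P2 t s))"
    unfolding dd_def[OF c1 c2] ric_eq[OF c1 sol1 t] ric_eq[OF c2 sol2 t] by (smt (verit) norm_triangle_ineq add_diff_add)
  also have "\<dots> \<le> (kapp TYPE('n) TYPE('m))\<^sup>2 * ((cPhi P1 P2 * ?D) * norm (G T) * cE P1 + cE P2 * 0 * cE P1 + cE P2 * norm (G T) * (cPhi P1 P2 * ?D))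
     + (cI1 * ?D * Wint + cI2 * ?D)" using 1 2 by (rule add_mono)
  also have "\<dots> = Cm * ?D" unfolding Cm_def by (simp add: algebra_simps)
  finally show ?thesis .
qed

end
end


context ric begin

context
  fixes P1 P2 :: "real \<Rightarrow> real^'n^'n"
  assumes sol1: "riccati_solution T A B Q S M G Gd Qt St Mt P1"
    and sol2: "riccati_solution T A B Q S M G Gd Qt St Mt P2"
begin

lemma c1: "continuous_on {0..T} P1" using sol1 unfolding riccati_solution_def by blast
lemma c2: "continuous_on {0..T} P2" using sol2 unfolding riccati_solution_def by blast

lemma key_step:
  assumes t0: "t0 \<in> {0..T}" and z: "\<And>u. u \<in> {0..T} \<Longrightarrow> t0 < u \<Longrightarrow> dd P1 P2 u = 0"
  shows "\<exists>t1. 0 \<le> t1 \<and> t1 \<le> t0 \<and> (t1 < t0 \<or> t1 = 0) \<and> (\<forall>u\<in>{0..T}. t1 \<le> u \<longrightarrow> dd P1 P2 u = 0)"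
proof -
  let ?d = "dd P1 P2" and ?C = "Cm P1 P2"
  define om where "om u = w u * indicator {..t0} u" for u :: real
  have om_nonneg: "0 \<le> om u" for u unfolding om_def using w_nonneg[of u] by (simp add: indicator_def)
  have om_int: "set_integrable lborel {0<..<T} om"
  proof (rule sint_bound[OF w_int, where c=1])
    have "set_borel_measurable lborel {0<..<T} (indicator {..t0} :: real \<Rightarrow> real)"
      unfolding set_borel_measurable_def by simp
    then show "set_borel_measurable lborel {0<..<T} om"
      unfolding om_def[abs_def] by (intro sbm_times w_sbm)
    show "norm (om x) \<le> 1 * w x" for x
      unfolding om_def using w_nonneg[of x] by (simp add: indicator_def)
  qed
  define beta where "beta t = (LINT u:{t<..<T}|lborel. om u)" for t
  have beta_eq: "beta t = (LBINT u=0..T. om u) - (LBINT u=0..t. om u)" if "t \<in> {0..T}" for t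
    unfolding beta_def using indef_diff[OF om_int, of t T] that
    by (simp add: zero_ereal_def LBINT_Ioo)
  have beta_cont: "continuous_on {0..T} beta"
  proof -
    have "continuous_on {0..T} (\<lambda>t. (LBINT u=0..T. om u) - (LBINT u=0..t. om u))"
      using indef_cont[OF om_int] by (intro continuous_intros) (simp add: zero_ereal_def)
    moreover have "\<And>x. x \<in> {0..T} \<Longrightarrow> (LBINT u=0..T. om u) - (LBINT u=0..x. om u) = beta x"
      by (simp add: beta_eq)
    ultimately show ?thesis by (rule continuous_on_eq)
  qed
  have beta_t0: "beta t0 = 0"
  proof -
    have "beta t0 = (LINT u:{t0<..<T}|lborel. (0::real))"
      unfolding beta_def by (rule set_lebesgue_integral_cong) (auto simp: om_def)
    then show ?thesis by simp
  qed
  have beta_mono: "beta t \<le> beta s" if "0 \<le> s" "s \<le> t" for s t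
    unfolding beta_def
    by (rule set_integral_mono_set[OF set_integrable_subset[OF om_int]]) (use that om_nonneg in auto)
  have C0: "0 \<le> ?C" by (rule Cm_nonneg[OF c1 c2])
  define e where "e = 1 / (2 * (?C + 1))"
  have e0: "0 < e" unfolding e_def using C0 by simp
  obtain dl where dl: "dl > 0" "\<And>t. t \<in> {0..T} \<Longrightarrow> dist t t0 < dl \<Longrightarrow> dist (beta t) (beta t0) < e"
    using beta_cont t0 e0 unfolding continuous_on_iff by metis
  define t1 where "t1 = max 0 (t0 - dl / 2)"
  have t1: "0 \<le> t1" "t1 \<le> t0" "t1 < t0 \<or> t1 = 0" unfolding t1_def using dl(1) t0 by auto
  have t1I: "t1 \<in> {0..T}" using t1 t0 by auto
  have "t0 - dl / 2 \<le> t1" by (simp add: t1_def)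
  then have "dist t1 t0 < dl" using t1(2) dl(1) unfolding dist_real_def by (simp add: abs_less_iff)
  then have "dist (beta t1) (beta t0) < e" by (rule dl(2)[OF t1I])
  then have bt1: "beta t1 < e" using beta_t0 unfolding dist_real_def by (simp add: abs_less_iff)
  obtain tm where tm: "tm \<in> {t1..t0}" "\<And>u. u \<in> {t1..t0} \<Longrightarrow> ?d u \<le> ?d tm"
    using continuous_attains_sup[of "{t1..t0}" ?d] continuous_on_subset[OF dd_cont[OF c1 c2], of "{t1..t0}"] t1 t0
    by auto
  let ?D = "?d tm"
  have D0: "0 \<le> ?D" by (rule dd_nonneg[OF c1 c2])
  have tmI: "tm \<in> {0..T}" using tm(1) t1 t0 by auto
  have "Dl P1 P2 tm \<le> (LINT u:{tm<..<T}|lborel. ?D * om u)"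
    unfolding Dl_def[OF c1 c2]
  proof (rule set_integral_mono)
    show "set_integrable lborel {tm<..<T} (\<lambda>u. w u * ?d u)"
      using tmI by (intro wd_int_sub[OF c1 c2]) auto
    show "set_integrable lborel {tm<..<T} (\<lambda>u. ?D * om u)"
      using tmI by (intro set_integrable_mult_right set_integrable_subset[OF om_int]) auto
    show "w u * ?d u \<le> ?D * om u" if "u \<in> {tm<..<T}" for u
    proof (cases "u \<le> t0")
      case True
      then have "?d u \<le> ?D" using that tm by (intro tm(2)) auto
      then show ?thesis unfolding om_def using True w_nonneg[of u] by (simp add: mult_left_mono mult.commute)
    next
      case False
      then have "?d u = 0" using that tmI by (intro z) auto
      then show ?thesis using D0 om_nonneg[of u] by simp
    qed
  qed
  also have "\<dots> = ?D * beta tm" unfolding beta_def by simp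
  also have "\<dots> \<le> ?D * beta t1" using D0 tm(1) t1 by (intro mult_left_mono beta_mono) auto
  finally have Dl_le: "Dl P1 P2 tm \<le> ?D * beta t1" .
  have "?D \<le> ?C * Dl P1 P2 tm" by (rule main_est[OF c1 c2 sol1 sol2 tmI])
  also have "\<dots> \<le> ?C * (?D * beta t1)" using C0 Dl_le by (rule mult_left_mono[rotated])
  also have "\<dots> \<le> ?C * (?D * e)" using C0 D0 bt1 by (intro mult_left_mono) auto
  also have "\<dots> = ?D * (?C / (2 * (?C + 1)))" unfolding e_def by simp
  also have "\<dots> \<le> ?D * (1/2)" using D0 C0 by (intro mult_left_mono) (auto simp: field_simps)
  finally have "?D \<le> 0" by simp
  then have Dz: "?D = 0" using D0 by simp
  show ?thesis
  proof (intro exI conjI ballI impI)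
    fix u assume u: "u \<in> {0..T}" "t1 \<le> u"
    show "?d u = 0"
    proof (cases "u \<le> t0")
      case True
      then have "?d u \<le> ?D" using u by (intro tm(2)) auto
      then show ?thesis using Dz dd_nonneg[OF c1 c2, of u] by simp
    next
      case False
      then show ?thesis using u z by auto
    qed
  qed (use t1 in auto)
qed

lemma all_zero: "\<forall>t\<in>{0..T}. P1 t = P2 t"
proof -
  let ?d = "dd P1 P2"
  define W where "W = {t \<in> {0..T}. \<forall>u\<in>{0..T}. t \<le> u \<longrightarrow> ?d u = 0}"
  obtain ta where ta: "0 \<le> ta" "ta \<le> T" "\<forall>u\<in>{0..T}. ta \<le> u \<longrightarrow> ?d u = 0"
    using key_step[OF T_in] by auto
  have taW: "ta \<in> W" unfolding W_def using ta by auto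
  have bdd: "bdd_below W" unfolding W_def by (rule bdd_belowI[of _ 0]) auto
  define s where "s = Inf W"
  have s_le: "s \<le> x" if "x \<in> W" for x unfolding s_def using bdd that by (rule cInf_lower[rotated])
  have s0: "0 \<le> s" unfolding s_def using taW by (intro cInf_greatest) (auto simp: W_def)
  have sI: "s \<in> {0..T}" using s0 s_le[OF taW] ta by auto
  have z: "?d u = 0" if "u \<in> {0..T}" "s < u" for u
  proof -
    have "Inf W < u" using that by (simp add: s_def)
    moreover have "W \<noteq> {}" using taW by auto
    ultimately obtain x where "x \<in> W" "x < u" using cInf_lessD[of W u] by auto
    then show ?thesis using that unfolding W_def by auto
  qed
  obtain t1 where t1: "0 \<le> t1" "t1 \<le> s" "t1 < s \<or> t1 = 0" "\<forall>u\<in>{0..T}. t1 \<le> u \<longrightarrow> ?d u = 0"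
    using key_step[OF sI z] by auto
  have "t1 \<in> W" unfolding W_def using t1 sI by auto
  then have "s \<le> t1" by (rule s_le)
  then have "t1 = 0" using t1 by auto
  then have "\<forall>u\<in>{0..T}. ?d u = 0" using t1 by auto
  then show ?thesis by (auto simp: dd_def[OF c1 c2])
qed

end
end
theorem proposition4p1:
  fixes T :: real
    and A :: "real \<Rightarrow> real^'n^'n" and B :: "real \<Rightarrow> real^'m^'n"
    and M Mt :: "real \<Rightarrow> real \<Rightarrow> real^'m^'m"
    and Q Qt :: "real \<Rightarrow> real \<Rightarrow> real^'n^'n"
    and S St :: "real \<Rightarrow> real \<Rightarrow> real^'n^'m"
    and G Gd :: "real \<Rightarrow> real^'n^'n"
    and P1 P2 :: "real \<Rightarrow> real^'n^'n"
  assumes T_pos: "T > 0"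
    and A_L1: "set_integrable lborel {0<..<T} A"
    and B_meas: "set_borel_measurable lborel {0<..<T} B"
    and B_L2: "set_integrable lborel {0<..<T} (\<lambda>t. (norm (B t))\<^sup>2)"
    and M_cont: "continuous_on ({0..T} \<times> {0..T}) (\<lambda>(t, s). M t s)"
    and M_pd: "\<And>t s. t \<in> {0..T} \<Longrightarrow> s \<in> {0..T} \<Longrightarrow> pos_def (M t s)"
    and Q_cont: "continuous_on ({0..T} \<times> {0..T}) (\<lambda>(t, s). Q t s)"
    and Q_psd: "\<And>t s. t \<in> {0..T} \<Longrightarrow> s \<in> {0..T} \<Longrightarrow> pos_semidef (Q t s)"
    and S_cont: "continuous_on ({0..T} \<times> {0..T}) (\<lambda>(t, s). S t s)"
    and G_psd: "\<And>t. t \<in> {0..T} \<Longrightarrow> pos_semidef (G t)"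
    and G_deriv: "\<And>t. t \<in> {0..T} \<Longrightarrow> (G has_vector_derivative Gd t) (at t within {0..T})"
    and Gd_cont: "continuous_on {0..T} Gd"
    and Q_deriv: "\<And>t s. t \<in> {0..T} \<Longrightarrow> s \<in> {0..T} \<Longrightarrow>
                   ((\<lambda>r. Q r s) has_vector_derivative Qt t s) (at t within {0..T})"
    and Qt_cont: "continuous_on ({0..T} \<times> {0..T}) (\<lambda>(t, s). Qt t s)"
    and S_deriv: "\<And>t s. t \<in> {0..T} \<Longrightarrow> s \<in> {0..T} \<Longrightarrow>
                   ((\<lambda>r. S r s) has_vector_derivative St t s) (at t within {0..T})"
    and St_cont: "continuous_on ({0..T} \<times> {0..T}) (\<lambda>(t, s). St t s)"
    and M_deriv: "\<And>t s. t \<in> {0..T} \<Longrightarrow> s \<in> {0..T} \<Longrightarrow>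
                   ((\<lambda>r. M r s) has_vector_derivative Mt t s) (at t within {0..T})"
    and Mt_cont: "continuous_on ({0..T} \<times> {0..T}) (\<lambda>(t, s). Mt t s)"
    and P1_sol: "riccati_solution T A B Q S M G Gd Qt St Mt P1"
    and P2_sol: "riccati_solution T A B Q S M G Gd Qt St Mt P2"
  shows "\<forall>t\<in>{0..T}. P1 t = P2 t"
  proof -
  interpret ric T A B M Mt Q Qt S St G Gd
    by (unfold_locales) (fact T_pos A_L1 B_meas B_L2 M_cont M_pd Q_cont S_cont Gd_cont Qt_cont St_cont Mt_cont)+
  show ?thesis by (rule all_zero[OF P1_sol P2_sol])
qed

end
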